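(* Let $(P,e)$, $P\in\mathcal{T}_k$, be a tree pattern, and let $X,Y,Y'\subseteq[k]$ be defined with respect to $(P,e)$ as below. Let $i\in X\cup Y\cup Y'$ be a non-root vertex of $P$ with $e(i)=0$, and define $e'\colon[k]\setminus\{r(P)\}\to\{0,1\}$ by $e'(i)=1$ and $e'(j)=e(j)$ for all $j\ne i$. Then $\mathcal{T}_n(P,e)=\mathcal{T}_n(P,e')$ for all $n\ge0$.
   Context: $\mathcal{T}_n$ is the set of binary trees on $n$ vertices labeled $1,\dots,n$ by the search tree property (left-subtree vertices of $i$ smaller than $i$, right-subtree vertices larger). $c_L(i),c_R(i),p(i)$: left child, right child, parent ($\varepsilon$ if nonexistent); $c_L^\ell,c_R^\ell$ denote iterates; $r(T)$ root; $L(i),R(i)$ subtrees rooted at $c_L(i),c_R(i)$. A tree pattern is $(P,e)$, $P\in\mathcal{T}_k$, $e\colon[k]\setminus\{r(P)\}\to\{0,1\}$ ($e(i)=1$: edge $(i,p(i))$ contiguous; $e(i)=0$: non-contiguous). $T\in\mathcal{T}_n$ contains $(P,e)$ if there is an injection $f\colon[k]\to[n]$ such that for every non-root $i$ of $P$: if $e(i)=1$, $f(i)$ is the left (resp. right) child of $f(p(i))$ when $i$ is the left (resp. right) child of $p(i)$; if $e(i)=0$, $f(i)\in L(f(p(i)))$ (resp. $R(f(p(i)))$) accordingly. $\mathcal{T}_n(P,e)$ is the set of $T\in\mathcal{T}_n$ avoiding $(P,e)$. For $i\in[k]$: $B_L'(i)=\{c_L^\ell(i):\ell\ge0,\ c_L^\ell(i)\text{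 exists, and } e(c_L^j(i))=1\text{ for } j=1,\dots,\ell\}$; $A_R(i)=\{a\in[k]: i=c_R^\ell(a)\text{ for some }\ell\ge0\text{ with } e(c_R^j(a))=1\text{ for } j=1,\dots,\ell\}$, and $a_R(i)$ is the topmost (closest to the root) vertex of $A_R(i)$. $B_R'(i)$, $A_L(i)$, $a_L(i)$ are defined in the same way with left and right interchanged. Then $X=\{i: c_L(i)=\varepsilon\text{ and } c_R(i)=\varepsilon\}$ (the leaves); $Y$ is the set of $i$ such that: $c_L(i)\ne\varepsilon$; $i=c_R(p(i))$; $A_R(p(i))=\{p(i)\}$ or $B_L'(i)=\{i\}$; $c_L(j)=\varepsilon$ for all $j\in A_R(p(i))$; $c_R(j)=\varepsilon$ for all $j\in B_L'(i)$; and $a_R(p(i))=r(P)$ or $e(a_R(p(i)))=0$; $Y'$ is the set of $i$ such that: $c_R(i)\ne\varepsilon$; $i=c_L(p(i))$; $A_L(p(i))=\{p(i)\}$ or $B_R'(i)=\{i\}$; $c_R(j)=\varepsilon$ for all $j\in A_L(p(i))$; $c_L(j)=\varepsilon$ for all $j\in B_R'(i)$; and $a_L(p(i))=r(P)$ or $e(a_L(p(i)))=0$. *)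

theory Defs
  imports Main "HOL-Library.Tree"
begin

text \<open>Binary trees are HOL-Library trees with natural-number labels. A tree on n
vertices labelled by the search tree property is exactly a tree whose in-order
traversal is the list 1,...,n.\<close>

definition search_trees :: "nat \<Rightarrow> nat tree set" where
  "search_trees n = {t. inorder t = [1..<n+1]}"

fun find :: "nat tree \<Rightarrow> nat \<Rightarrow> nat tree" where
  "find Leaf i = Leaf"
| "find (Node l a r) i =
     (if a = i then Node l a r else if find l i \<noteq> Leaf then find l i else find r i)"

fun root_of :: "nat tree \<Rightarrow> nat option" where
  "root_of Leaf = None"
| "root_of (Node l a r) = Some a"

definition lc :: "nat tree \<Rightarrow> nat \<Rightarrow> nat option" where
  "lc t i = (case find t i of Leaf \<Rightarrow> None | Node l _ _ \<Rightarrow> root_of l)"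

definition rc :: "nat tree \<Rightarrow> nat \<Rightarrow> nat option" where
  "rc t i = (case find t i of Leaf \<Rightarrow> None | Node _ _ r \<Rightarrow> root_of r)"

definition Lsub :: "nat tree \<Rightarrow> nat \<Rightarrow> nat set" where
  "Lsub t i = (case find t i of Leaf \<Rightarrow> {} | Node l _ _ \<Rightarrow> set_tree l)"

definition Rsub :: "nat tree \<Rightarrow> nat \<Rightarrow> nat set" where
  "Rsub t i = (case find t i of Leaf \<Rightarrow> {} | Node _ _ r \<Rightarrow> set_tree r)"

definition par :: "nat tree \<Rightarrow> nat \<Rightarrow> nat option" where
  "par t i = (if \<exists>p. lc t p = Some i \<or> rc t p = Some i
              then Some (SOME p. lc t p = Some i \<or> rc t p = Some i) else None)"

fun lcit :: "nat tree \<Rightarrow> nat \<Rightarrow> nat \<Rightarrow> nat option" where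
  "lcit t i 0 = Some i"
| "lcit t i (Suc l) = (case lcit t i l of None \<Rightarrow> None | Some j \<Rightarrow> lc t j)"

fun rcit :: "nat tree \<Rightarrow> nat \<Rightarrow> nat \<Rightarrow> nat option" where
  "rcit t i 0 = Some i"
| "rcit t i (Suc l) = (case rcit t i l of None \<Rightarrow> None | Some j \<Rightarrow> rc t j)"

text \<open>Tree patterns: a tree P and e :: nat => bool (True = contiguous edge);
only the values of e on non-root vertices of P are relevant.\<close>
definition contains :: "nat tree \<Rightarrow> nat tree \<Rightarrow> (nat \<Rightarrow> bool) \<Rightarrow> bool" where
  "contains T P e \<longleftrightarrow> (\<exists>f. inj_on f (set_tree P) \<and> f ` set_tree P \<subseteq> set_tree T \<and>
     (\<forall>j\<in>set_tree P. \<forall>p. 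
        (lc P p = Some j \<longrightarrow>
           (if e j then lc T (f p) = Some (f j) else f j \<in> Lsub T (f p))) \<and>
        (rc P p = Some j \<longrightarrow>
           (if e j then rc T (f p) = Some (f j) else f j \<in> Rsub T (f p)))))"

definition avoiders :: "nat \<Rightarrow> nat tree \<Rightarrow> (nat \<Rightarrow> bool) \<Rightarrow> nat tree set" where
  "avoiders n P e = {T \<in> search_trees n. \<not> contains T P e}"

definition BL' :: "nat tree \<Rightarrow> (nat \<Rightarrow> bool) \<Rightarrow> nat \<Rightarrow> nat set" where
  "BL' P e i = {j. \<exists>l. lcit P i l = Some j \<and> (\<forall>m\<in>{1..l}. e (the (lcit P i m)))}"

definition BR' :: "nat tree \<Rightarrow> (nat \<Rightarrow> bool) \<Rightarrow> nat \<Rightarrow> nat set" where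
  "BR' P e i = {j. \<exists>l. rcit P i l = Some j \<and> (\<forall>m\<in>{1..l}. e (the (rcit P i m)))}"

definition AR :: "nat tree \<Rightarrow> (nat \<Rightarrow> bool) \<Rightarrow> nat \<Rightarrow> nat set" where
  "AR P e i = {a \<in> set_tree P. \<exists>l. rcit P a l = Some i \<and> (\<forall>m\<in>{1..l}. e (the (rcit P a m)))}"

definition AL :: "nat tree \<Rightarrow> (nat \<Rightarrow> bool) \<Rightarrow> nat \<Rightarrow> nat set" where
  "AL P e i = {a \<in> set_tree P. \<exists>l. lcit P a l = Some i \<and> (\<forall>m\<in>{1..l}. e (the (lcit P a m)))}"

definition depth :: "nat tree \<Rightarrow> nat \<Rightarrow> nat" where
  "depth t a = card {b \<in> set_tree t. b \<noteq> a \<and> a \<in> set_tree (find t b)}"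

definition aR :: "nat tree \<Rightarrow> (nat \<Rightarrow> bool) \<Rightarrow> nat \<Rightarrow> nat" where
  "aR P e i = (ARG_MIN (depth P) a. a \<in> AR P e i)"

definition aL :: "nat tree \<Rightarrow> (nat \<Rightarrow> bool) \<Rightarrow> nat \<Rightarrow> nat" where
  "aL P e i = (ARG_MIN (depth P) a. a \<in> AL P e i)"

definition Xset :: "nat tree \<Rightarrow> nat set" where
  "Xset P = {i \<in> set_tree P. lc P i = None \<and> rc P i = None}"

definition Yset :: "nat tree \<Rightarrow> (nat \<Rightarrow> bool) \<Rightarrow> nat set" where
  "Yset P e = {i \<in> set_tree P. lc P i \<noteq> None \<and>
     (\<exists>p. par P i = Some p \<and> rc P p = Some i \<and>
        (AR P e p = {p} \<or> BL' P e i = {i}) \<and>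
        (\<forall>j\<in>AR P e p. lc P j = None) \<and>
        (\<forall>j\<in>BL' P e i. rc P j = None) \<and>
        (Some (aR P e p) = root_of P \<or> \<not> e (aR P e p)))}"

definition Y'set :: "nat tree \<Rightarrow> (nat \<Rightarrow> bool) \<Rightarrow> nat set" where
  "Y'set P e = {i \<in> set_tree P. rc P i \<noteq> None \<and>
     (\<exists>p. par P i = Some p \<and> lc P p = Some i \<and>
        (AL P e p = {p} \<or> BR' P e i = {i}) \<and>
        (\<forall>j\<in>AL P e p. rc P j = None) \<and>
        (\<forall>j\<in>BR' P e i. lc P j = None) \<and>
        (Some (aL P e p) = root_of P \<or> \<not> e (aL P e p)))}"

end

theory Submission
  imports Defs
begin


lemma find_nonleaf: "find t x \<noteq> Leaf \<longleftrightarrow> x \<in> set_tree t"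
  by (induction t) auto

lemma find_root: "x \<in> set_tree t \<Longrightarrow> \<exists>l r. find t x = Node l x r"
  by (induction t) (auto simp: find_nonleaf split: if_splits)

lemma find_subset: "set_tree (find t x) \<subseteq> set_tree t"
  by (induction t) auto

lemma find_bst: "bst (Node l a r) \<Longrightarrow>
   find (Node l a r) x = (if x = a then Node l a r else if x < a then find l x else find r x)"
proof -
  assume b: "bst (Node l a r)"
  show ?thesis
  proof (cases "x = a")
    case False
    show ?thesis
    proof (cases "x < a")
      case True
      then have "x \<notin> set_tree r" using b by auto
      then have "find r x = Leaf" using find_nonleaf by blast
      then show ?thesis using True False by auto
    next
      case F: False
      then have "x \<notin> set_tree l" using b False by auto
      then have "find l x = Leaf" using find_nonleaf by blast
      then show ?thesis using F False by auto
    qed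
  qed simp
qed

lemma bst_find: "bst t \<Longrightarrow> bst (find t x)"
proof (induction t)
  case (Node l a r)
  then show ?case by (subst find_bst) auto
qed simp

lemma root_of_ex: "y \<in> set_tree s \<Longrightarrow> \<exists>c. root_of s = Some c"
  by (cases s) auto

lemma find_find: "bst t \<Longrightarrow> y \<in> set_tree (find t x) \<Longrightarrow> find t y = find (find t x) y"
proof (induction t)
  case Leaf
  then show ?case by simp
next
  case (Node l a r)
  have b: "bst (Node l a r)" by fact
  show ?case
  proof (cases "x = a")
    case True
    then show ?thesis by simp
  next
    case False
    show ?thesis
    proof (cases "x < a")
      case True
      then have f: "find (Node l a r) x = find l x" using b False find_bst[OF b, of x] by simp
      then have "y \<in> set_tree l" using Node.prems find_subset by fastforce
      then have "y < a" using b by auto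
      then have "find (Node l a r) y = find l y" using b find_bst[OF b, of y] by simp
      then show ?thesis using f Node.IH(1) Node.prems b by simp
    next
      case F: False
      then have f: "find (Node l a r) x = find r x" using b False F find_bst[OF b, of x] by simp
      then have "y \<in> set_tree r" using Node.prems find_subset by fastforce
      then have "a < y" using b by auto
      then have "find (Node l a r) y = find r y" using b find_bst[OF b, of y] by simp
      then show ?thesis using f Node.IH(2) Node.prems b by simp
    qed
  qed
qed

definition Ssub :: "nat tree \<Rightarrow> nat \<Rightarrow> nat set" where
  "Ssub t x = set_tree (find t x)"

lemma S_self: "x \<in> set_tree t \<Longrightarrow> x \<in> Ssub t x"
  using find_root[of x t] by (auto simp: Ssub_def)

lemma S_subset: "Ssub t x \<subseteq> set_tree t"
  using find_subset by (auto simp: Ssub_def)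

lemma S_trans: "bst t \<Longrightarrow> y \<in> Ssub t x \<Longrightarrow> Ssub t y \<subseteq> Ssub t x"
  using find_find[of t y x] find_subset[of "find t x" y] by (auto simp: Ssub_def)

lemma L_sub_S: "Lsub t x \<subseteq> Ssub t x"
  by (auto simp: Lsub_def Ssub_def split: tree.splits)

lemma R_sub_S: "Rsub t x \<subseteq> Ssub t x"
  by (auto simp: Rsub_def Ssub_def split: tree.splits)

lemma S_decomp: "x \<in> set_tree t \<Longrightarrow> Ssub t x = insert x (Lsub t x \<union> Rsub t x)"
  using find_root[of x t] by (auto simp: Ssub_def Lsub_def Rsub_def)

lemma L_less: "bst t \<Longrightarrow> y \<in> Lsub t x \<Longrightarrow> y < x"
  using bst_find[of t x] find_root[of x t] find_nonleaf[of t x]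
  by (auto simp: Lsub_def split: tree.splits)

lemma R_gt: "bst t \<Longrightarrow> y \<in> Rsub t x \<Longrightarrow> x < y"
  using bst_find[of t x] find_root[of x t] find_nonleaf[of t x]
  by (auto simp: Rsub_def split: tree.splits)

lemma L_trans: "bst t \<Longrightarrow> y \<in> Lsub t x \<Longrightarrow> Ssub t y \<subseteq> Lsub t x"
proof -
  assume b: "bst t" and y: "y \<in> Lsub t x"
  then have "x \<in> set_tree t" using find_nonleaf[of t x] by (auto simp: Lsub_def split: tree.splits)
  then obtain l r where f: "find t x = Node l x r" using find_root by blast
  then have yl: "y \<in> set_tree l" using y by (simp add: Lsub_def)
  have bb: "bst (Node l x r)" using bst_find[OF b, of x] f by simp
  have "find t y = find (Node l x r) y" using find_find[OF b, of y x] f yl by simp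
  also have "\<dots> = find l y" using find_bst[OF bb, of y] yl bb by auto
  finally show ?thesis using find_subset[of l y] f by (auto simp: Ssub_def Lsub_def)
qed

lemma R_trans: "bst t \<Longrightarrow> y \<in> Rsub t x \<Longrightarrow> Ssub t y \<subseteq> Rsub t x"
proof -
  assume b: "bst t" and y: "y \<in> Rsub t x"
  then have "x \<in> set_tree t" using find_nonleaf[of t x] by (auto simp: Rsub_def split: tree.splits)
  then obtain l r where f: "find t x = Node l x r" using find_root by blast
  then have yl: "y \<in> set_tree r" using y by (simp add: Rsub_def)
  have bb: "bst (Node l x r)" using bst_find[OF b, of x] f by simp
  have "find t y = find (Node l x r) y" using find_find[OF b, of y x] f yl by simp
  also have "\<dots> = find r y" using find_bst[OF bb, of y] yl bb by auto
  finally show ?thesis using find_subset[of r y] f by (auto simp: Ssub_def Rsub_def)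
qed

lemma lc_L: "lc t x = Some y \<Longrightarrow> y \<in> Lsub t x"
  by (auto simp: lc_def Lsub_def split: tree.splits elim: root_of.elims)

lemma rc_R: "rc t x = Some y \<Longrightarrow> y \<in> Rsub t x"
  by (auto simp: rc_def Rsub_def split: tree.splits elim: root_of.elims)

lemma L_in: "y \<in> Lsub t x \<Longrightarrow> x \<in> set_tree t \<and> y \<in> set_tree t"
  using find_nonleaf[of t x] find_subset[of t x] by (auto simp: Lsub_def split: tree.splits)

lemma R_in: "y \<in> Rsub t x \<Longrightarrow> x \<in> set_tree t \<and> y \<in> set_tree t"
  using find_nonleaf[of t x] find_subset[of t x] by (auto simp: Rsub_def split: tree.splits)

lemma lc_in: "lc t x = Some y \<Longrightarrow> x \<in> set_tree t \<and> y \<in> set_tree t"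
  using lc_L L_in by blast

lemma rc_in: "rc t x = Some y \<Longrightarrow> x \<in> set_tree t \<and> y \<in> set_tree t"
  using rc_R R_in by blast

lemma lc_S: "bst t \<Longrightarrow> lc t x = Some y \<Longrightarrow> Ssub t y = Lsub t x"
proof -
  assume b: "bst t" and y: "lc t x = Some y"
  then have "x \<in> set_tree t" using lc_in by blast
  then obtain l r where f: "find t x = Node l x r" using find_root by blast
  then obtain ll lr where l: "l = Node ll y lr" using y by (cases l) (auto simp: lc_def)
  have bb: "bst (Node l x r)" using bst_find[OF b, of x] f by simp
  have "find t y = find (Node l x r) y" using find_find[OF b, of y x] f l by simp
  also have "\<dots> = l" using find_bst[OF bb, of y] l bb by auto
  finally show ?thesis using f by (auto simp: Ssub_def Lsub_def)
qed

lemma rc_S: "bst t \<Longrightarrow> rc t x = Some y \<Longrightarrow> Ssub t y = Rsub t x"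
proof -
  assume b: "bst t" and y: "rc t x = Some y"
  then have "x \<in> set_tree t" using rc_in by blast
  then obtain l r where f: "find t x = Node l x r" using find_root by blast
  then obtain rl rr where l: "r = Node rl y rr" using y by (cases r) (auto simp: rc_def)
  have bb: "bst (Node l x r)" using bst_find[OF b, of x] f by simp
  have "find t y = find (Node l x r) y" using find_find[OF b, of y x] f l by simp
  also have "\<dots> = r" using find_bst[OF bb, of y] l bb by auto
  finally show ?thesis using f by (auto simp: Ssub_def Rsub_def)
qed

lemma L_nonempty: "y \<in> Lsub t x \<Longrightarrow> \<exists>c. lc t x = Some c"
  by (auto simp: Lsub_def lc_def root_of_ex split: tree.splits)

lemma R_nonempty: "y \<in> Rsub t x \<Longrightarrow> \<exists>c. rc t x = Some c"
  by (auto simp: Rsub_def rc_def root_of_ex split: tree.splits)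

lemma S_antisym: "bst t \<Longrightarrow> x \<in> Ssub t y \<Longrightarrow> y \<in> Ssub t x \<Longrightarrow> x = y"
proof (rule ccontr)
  assume b: "bst t" and xy: "x \<in> Ssub t y" and yx: "y \<in> Ssub t x" and ne: "x \<noteq> y"
  have "y \<in> set_tree t" using xy find_nonleaf[of t y] by (auto simp: Ssub_def)
  then have "x \<in> Lsub t y \<or> x \<in> Rsub t y" using S_decomp[of y t] xy ne by auto
  then show False
  proof
    assume "x \<in> Lsub t y"
    then have "y \<in> Lsub t y" using L_trans[OF b] yx by blast
    then show False using L_less[OF b] by blast
  next
    assume "x \<in> Rsub t y"
    then have "y \<in> Rsub t y" using R_trans[OF b] yx by blast
    then show False using R_gt[OF b] by blast
  qed
qed


definition child :: "nat tree \<Rightarrow> nat \<Rightarrow> nat \<Rightarrow> bool" where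
  "child t w z \<longleftrightarrow> lc t w = Some z \<or> rc t w = Some z"

lemma find_Node_left: "bst (Node l a r) \<Longrightarrow> w \<in> set_tree l \<Longrightarrow> find (Node l a r) w = find l w"
  using find_bst[of l a r w] by auto

lemma find_Node_right: "bst (Node l a r) \<Longrightarrow> w \<in> set_tree r \<Longrightarrow> find (Node l a r) w = find r w"
  using find_bst[of l a r w] by auto

lemma child_in: "child t w z \<Longrightarrow> w \<in> set_tree t \<and> z \<in> set_tree t"
  unfolding child_def using lc_in rc_in by blast

lemma child_Node: "bst (Node l a r) \<Longrightarrow> child (Node l a r) w z \<longleftrightarrow>
   (w = a \<and> (root_of l = Some z \<or> root_of r = Some z)) \<or> (w \<in> set_tree l \<and> child l w z) \<or> (w \<in> set_tree r \<and> child r w z)"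
proof -
  assume b: "bst (Node l a r)"
  show ?thesis
  proof (cases "w = a")
    case True
    then show ?thesis using b by (auto simp: child_def lc_def rc_def dest: child_in)
  next
    case False
    show ?thesis
    proof (cases "w \<in> set_tree l")
      case True
      then have "w \<notin> set_tree r" using b by fastforce
      then show ?thesis using True False find_Node_left[OF b True] 
        by (auto simp: child_def lc_def rc_def)
    next
      case F2: False
      show ?thesis
      proof (cases "w \<in> set_tree r")
        case True
        then show ?thesis using F2 False find_Node_right[OF b True] 
          by (auto simp: child_def lc_def rc_def)
      next
        case False
        then have "w \<notin> set_tree (Node l a r)" using F2 \<open>w \<noteq> a\<close> by simp
        then show ?thesis using child_in[of "Node l a r" w z] F2 False by auto
      qed
    qed
  qed
qed

lemma child_ne_root: "bst t \<Longrightarrow> child t w z \<Longrightarrow> root_of t \<noteq> Some z"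
proof (cases t)
  case (Node l a r)
  assume b: "bst t" and c: "child t w z"
  show ?thesis
  proof
    assume "root_of t = Some z"
    then have za: "z = a" using Node by simp
    have ft: "Ssub t a = set_tree t" using Node by (simp add: Ssub_def)
    have w: "w \<in> set_tree t" using child_in[OF c] by simp
    from c show False unfolding child_def
    proof
      assume "lc t w = Some z"
      then have "z \<in> Lsub t w" by (rule lc_L)
      then have "Ssub t z \<subseteq> Lsub t w" using L_trans[OF b] by blast
      then have "w \<in> Lsub t w" using w ft za by blast
      then show False using L_less[OF b] by blast
    next
      assume "rc t w = Some z"
      then have "z \<in> Rsub t w" by (rule rc_R)
      then have "Ssub t z \<subseteq> Rsub t w" using R_trans[OF b] by blast
      then have "w \<in> Rsub t w" using w ft za by blast
      then show False using R_gt[OF b] by blast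
    qed
  qed
qed (simp)

lemma parent_exists: "bst s \<Longrightarrow> z \<in> set_tree s \<Longrightarrow> root_of s \<noteq> Some z \<Longrightarrow> \<exists>w\<in>set_tree s. child s w z"
proof (induction s)
  case Leaf
  then show ?case by simp
next
  case (Node l a r)
  have b: "bst (Node l a r)" by fact
  have za: "z \<noteq> a" using Node.prems by simp
  then have "z \<in> set_tree l \<or> z \<in> set_tree r" using Node.prems by simp
  then show ?case
  proof
    assume zl: "z \<in> set_tree l"
    show ?thesis
    proof (cases "root_of l = Some z")
      case True
      then show ?thesis using child_Node[OF b, of a z] by auto
    next
      case False
      then obtain w where "w \<in> set_tree l" "child l w z" using Node.IH(1) b zl by auto
      then show ?thesis using child_Node[OF b, of w z] by auto
    qed
  next
    assume zl: "z \<in> set_tree r"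
    show ?thesis
    proof (cases "root_of r = Some z")
      case True
      then show ?thesis using child_Node[OF b, of a z] by auto
    next
      case False
      then obtain w where "w \<in> set_tree r" "child r w z" using Node.IH(2) b zl by auto
      then show ?thesis using child_Node[OF b, of w z] by auto
    qed
  qed
qed

lemma child_find: "bst t \<Longrightarrow> w \<in> set_tree (find t x) \<Longrightarrow> child (find t x) w z = child t w z"
  using find_find[of t w x] by (simp add: child_def lc_def rc_def)

lemma parent_between: "bst t \<Longrightarrow> z \<in> Ssub t x \<Longrightarrow> z \<noteq> x \<Longrightarrow> \<exists>w\<in>Ssub t x. child t w z"
proof -
  assume b: "bst t" and z: "z \<in> Ssub t x" and ne: "z \<noteq> x"
  have "x \<in> set_tree t" using z find_nonleaf[of t x] by (auto simp: Ssub_def)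
  then obtain l r where f: "find t x = Node l x r" using find_root by blast
  have bb: "bst (find t x)" using bst_find[OF b] .
  obtain w where w: "w \<in> set_tree (find t x)" "child (find t x) w z"
    using parent_exists[OF bb, of z] z ne f by (auto simp: Ssub_def)
  then show ?thesis using child_find[OF b w(1)] by (auto simp: Ssub_def)
qed

lemma parent_unique: "bst t \<Longrightarrow> child t w z \<Longrightarrow> child t w' z \<Longrightarrow> w = w'"
proof (induction t)
  case Leaf
  then show ?case by (auto dest: child_in)
next
  case (Node l a r)
  have b: "bst (Node l a r)" by fact
  have bl: "bst l" "bst r" using b by auto
  have dis: "\<And>x. x \<in> set_tree l \<Longrightarrow> x \<notin> set_tree r" using b by fastforce
  have rl: "\<And>x. root_of l = Some x \<Longrightarrow> x \<in> set_tree l" by (cases l) auto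
  have rr: "\<And>x. root_of r = Some x \<Longrightarrow> x \<in> set_tree r" by (cases r) auto
  have cl: "\<And>w. child l w z \<Longrightarrow> z \<in> set_tree l \<and> root_of l \<noteq> Some z"
    using child_in child_ne_root[OF bl(1)] by blast
  have cr: "\<And>w. child r w z \<Longrightarrow> z \<in> set_tree r \<and> root_of r \<noteq> Some z"
    using child_in child_ne_root[OF bl(2)] by blast
  show ?case
    using child_Node[OF b, of w z] child_Node[OF b, of w' z] Node.prems Node.IH bl dis rl rr cl cr
    by metis
qed

lemma lc_rc_distinct: "bst t \<Longrightarrow> lc t w = Some z \<Longrightarrow> rc t w' = Some z \<Longrightarrow> False"
proof -
  assume b: "bst t" and l: "lc t w = Some z" and r: "rc t w' = Some z"
  then have "w = w'" using parent_unique[OF b, of w z w'] by (auto simp: child_def)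
  then show False using L_less[OF b lc_L[OF l]] R_gt[OF b rc_R[OF r]] by simp
qed

lemma depth_less: "bst t \<Longrightarrow> a \<in> Ssub t j \<Longrightarrow> a \<noteq> j \<Longrightarrow> depth t j < depth t a"
proof -
  assume b: "bst t" and a: "a \<in> Ssub t j" and ne: "a \<noteq> j"
  have j: "j \<in> set_tree t" using a find_nonleaf[of t j] by (auto simp: Ssub_def)
  let ?A = "{b \<in> set_tree t. b \<noteq> j \<and> j \<in> set_tree (find t b)}"
  let ?B = "{b \<in> set_tree t. b \<noteq> a \<and> a \<in> set_tree (find t b)}"
  have "?A \<subseteq> ?B"
  proof
    fix x assume x: "x \<in> ?A"
    then have "j \<in> Ssub t x" by (simp add: Ssub_def)
    then have "a \<in> Ssub t x" using S_trans[OF b] a by blast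
    moreover have "x \<noteq> a"
    proof
      assume "x = a"
      then have "j = a" using S_antisym[OF b] a \<open>j \<in> Ssub t x\<close> by blast
      then show False using ne by simp
    qed
    ultimately show "x \<in> ?B" using x by (simp add: Ssub_def)
  qed
  moreover have "j \<in> ?B - ?A" using j a ne by (simp add: Ssub_def)
  ultimately have "?A \<subset> ?B" by blast
  then have "card ?A < card ?B" by (rule psubset_card_mono[rotated]) simp
  then show ?thesis by (simp add: depth_def)
qed


definition valid :: "nat tree \<Rightarrow> nat tree \<Rightarrow> (nat \<Rightarrow> bool) \<Rightarrow> (nat \<Rightarrow> nat) \<Rightarrow> bool" where
  "valid T P e f \<longleftrightarrow> f ` set_tree P \<subseteq> set_tree T \<and>
     (\<forall>j\<in>set_tree P. \<forall>p. 
        (lc P p = Some j \<longrightarrow>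
           (if e j then lc T (f p) = Some (f j) else f j \<in> Lsub T (f p))) \<and>
        (rc P p = Some j \<longrightarrow>
           (if e j then rc T (f p) = Some (f j) else f j \<in> Rsub T (f p))))"

lemma contains_valid: "contains T P e \<longleftrightarrow> (\<exists>f. inj_on f (set_tree P) \<and> valid T P e f)"
  unfolding contains_def valid_def by blast

lemma valid_img: "valid T P e f \<Longrightarrow> x \<in> set_tree P \<Longrightarrow> f x \<in> set_tree T"
  unfolding valid_def by blast

lemma valid_lc: "valid T P e f \<Longrightarrow> lc P p = Some j \<Longrightarrow>
   (if e j then lc T (f p) = Some (f j) else f j \<in> Lsub T (f p))"
  unfolding valid_def using lc_in by blast

lemma valid_rc: "valid T P e f \<Longrightarrow> rc P p = Some j \<Longrightarrow>
   (if e j then rc T (f p) = Some (f j) else f j \<in> Rsub T (f p))"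
  unfolding valid_def using rc_in by blast

lemma valid_L: "valid T P e f \<Longrightarrow> lc P p = Some j \<Longrightarrow> f j \<in> Lsub T (f p)"
  using valid_lc[of T P e f p j] lc_L by (auto split: if_splits)

lemma valid_R: "valid T P e f \<Longrightarrow> rc P p = Some j \<Longrightarrow> f j \<in> Rsub T (f p)"
  using valid_rc[of T P e f p j] rc_R by (auto split: if_splits)

lemma validI:
  assumes "f ` set_tree P \<subseteq> set_tree T"
    and "\<And>p j. lc P p = Some j \<Longrightarrow> (if e j then lc T (f p) = Some (f j) else f j \<in> Lsub T (f p))"
    and "\<And>p j. rc P p = Some j \<Longrightarrow> (if e j then rc T (f p) = Some (f j) else f j \<in> Rsub T (f p))"
  shows "valid T P e f"
  using assms unfolding valid_def by blast

lemma valid_weaken: "valid T P e f \<Longrightarrow> (\<And>j. e' j \<Longrightarrow> e j) \<Longrightarrow> valid T P e' f"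
proof (rule validI)
  assume v: "valid T P e f" and ee: "\<And>j. e' j \<Longrightarrow> e j"
  show "f ` set_tree P \<subseteq> set_tree T" using v valid_def by blast
  fix p j
  show "lc P p = Some j \<Longrightarrow> (if e' j then lc T (f p) = Some (f j) else f j \<in> Lsub T (f p))"
    using valid_lc[OF v] valid_L[OF v] ee by auto
  show "rc P p = Some j \<Longrightarrow> (if e' j then rc T (f p) = Some (f j) else f j \<in> Rsub T (f p))"
    using valid_rc[OF v] valid_R[OF v] ee by auto
qed

lemma find_child_l: "bst P \<Longrightarrow> find P v = Node l v r \<Longrightarrow> l = Node ll c lr \<Longrightarrow>
   lc P v = Some c \<and> find P c = l"
proof -
  assume b: "bst P" and f: "find P v = Node l v r" and l: "l = Node ll c lr"
  have bb: "bst (Node l v r)" using bst_find[OF b, of v] f by simp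
  have "find P c = find (Node l v r) c" using find_find[OF b, of c v] f l by simp
  also have "\<dots> = l" using find_Node_left[OF bb, of c] l by simp
  finally show ?thesis using f l by (simp add: lc_def)
qed

lemma find_child_r: "bst P \<Longrightarrow> find P v = Node l v r \<Longrightarrow> r = Node rl c rr \<Longrightarrow>
   rc P v = Some c \<and> find P c = r"
proof -
  assume b: "bst P" and f: "find P v = Node l v r" and l: "r = Node rl c rr"
  have bb: "bst (Node l v r)" using bst_find[OF b, of v] f by simp
  have "find P c = find (Node l v r) c" using find_find[OF b, of c v] f l by simp
  also have "\<dots> = r" using find_Node_right[OF bb, of c] l by simp
  finally show ?thesis using f l by (simp add: rc_def)
qed

lemma find_Node_eq: "find P v = Node l a r \<Longrightarrow> a = v"
  using find_root[of v P] find_nonleaf[of P v] by auto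

lemma valid_sub_aux:
  assumes bP: "bst P" and bT: "bst T" and v: "valid T P e f"
  shows "\<forall>x. find P x = s \<longrightarrow> s \<noteq> Leaf \<longrightarrow> f ` set_tree s \<subseteq> Ssub T (f x)"
proof (induction s)
  case Leaf
  then show ?case by simp
next
  case (Node l a r)
  show ?case
  proof (intro allI impI)
    fix x assume fx: "find P x = Node l a r"
    then have ax: "a = x" using find_Node_eq by blast
    have xP: "x \<in> set_tree P" using fx find_nonleaf by fastforce
    have fxT: "f x \<in> Ssub T (f x)" using S_self valid_img[OF v xP] by blast
    have L: "f ` set_tree l \<subseteq> Ssub T (f x)"
    proof (cases l)
      case (Node ll c lr)
      then have c: "lc P x = Some c" "find P c = l" using find_child_l[OF bP] fx ax by blast+
      then have "f ` set_tree l \<subseteq> Ssub T (f c)" using Node.IH(1)[rule_format, OF c(2)] Node by simp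
      moreover have "Ssub T (f c) \<subseteq> Lsub T (f x)" using L_trans[OF bT valid_L[OF v c(1)]] .
      ultimately show ?thesis using L_sub_S by blast
    qed simp
    have R: "f ` set_tree r \<subseteq> Ssub T (f x)"
    proof (cases r)
      case (Node rl c rr)
      then have c: "rc P x = Some c" "find P c = r" using find_child_r[OF bP] fx ax by blast+
      then have "f ` set_tree r \<subseteq> Ssub T (f c)" using Node.IH(2)[rule_format, OF c(2)] Node by simp
      moreover have "Ssub T (f c) \<subseteq> Rsub T (f x)" using R_trans[OF bT valid_R[OF v c(1)]] .
      ultimately show ?thesis using R_sub_S by blast
    qed simp
    show "f ` set_tree (Node l a r) \<subseteq> Ssub T (f x)" using L R fxT ax by auto
  qed
qed

lemma valid_sub:
  assumes bP: "bst P" and bT: "bst T" and v: "valid T P e f" and x: "x \<in> set_tree P"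
  shows "f ` Ssub P x \<subseteq> Ssub T (f x)"
  using valid_sub_aux[OF bP bT v, rule_format, of x "find P x"] find_nonleaf[of P x] x
  by (simp add: Ssub_def)

lemma valid_subL:
  assumes bP: "bst P" and bT: "bst T" and v: "valid T P e f"
  shows "f ` Lsub P x \<subseteq> Lsub T (f x)"
proof (cases "Lsub P x = {}")
  case False
  then obtain c where c: "lc P x = Some c" using L_nonempty by blast
  then have "Lsub P x = Ssub P c" using lc_S[OF bP] by simp
  moreover have "f ` Ssub P c \<subseteq> Ssub T (f c)" using valid_sub[OF bP bT v] lc_in[OF c] by blast
  moreover have "Ssub T (f c) \<subseteq> Lsub T (f x)" using L_trans[OF bT valid_L[OF v c]] .
  ultimately show ?thesis by blast
qed simp

lemma valid_subR:
  assumes bP: "bst P" and bT: "bst T" and v: "valid T P e f"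
  shows "f ` Rsub P x \<subseteq> Rsub T (f x)"
proof (cases "Rsub P x = {}")
  case False
  then obtain c where c: "rc P x = Some c" using R_nonempty by blast
  then have "Rsub P x = Ssub P c" using rc_S[OF bP] by simp
  moreover have "f ` Ssub P c \<subseteq> Ssub T (f c)" using valid_sub[OF bP bT v] rc_in[OF c] by blast
  moreover have "Ssub T (f c) \<subseteq> Rsub T (f x)" using R_trans[OF bT valid_R[OF v c]] .
  ultimately show ?thesis by blast
qed simp

lemma valid_mono_aux:
  assumes bP: "bst P" and bT: "bst T" and v: "valid T P e f"
  shows "\<forall>x. find P x = s \<longrightarrow> (\<forall>a\<in>set_tree s. \<forall>b\<in>set_tree s. a < b \<longrightarrow> f a < f b)"
proof (induction s)
  case Leaf
  then show ?case by simp
next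
  case (Node l a0 r)
  show ?case
  proof (intro allI impI)
    fix x assume fx: "find P x = Node l a0 r"
    then have ax: "a0 = x" using find_Node_eq by blast
    have bb: "bst (Node l x r)" using bst_find[OF bP, of x] fx ax by simp
    have Ls: "Lsub P x = set_tree l" "Rsub P x = set_tree r" using fx ax by (simp_all add: Lsub_def Rsub_def)
    have fl: "\<And>a. a \<in> set_tree l \<Longrightarrow> f a < f x"
      using valid_subL[OF bP bT v, of x] Ls L_less[OF bT] by blast
    have fr: "\<And>a. a \<in> set_tree r \<Longrightarrow> f x < f a"
      using valid_subR[OF bP bT v, of x] Ls R_gt[OF bT] by blast
    have IHl: "\<forall>a\<in>set_tree l. \<forall>b\<in>set_tree l. a < b \<longrightarrow> f a < f b"
    proof (cases l)
      case (Node ll c lr)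
      then have "find P c = l" using find_child_l[OF bP] fx ax by blast
      then show ?thesis using Node.IH(1) by blast
    qed simp
    have IHr: "\<forall>a\<in>set_tree r. \<forall>b\<in>set_tree r. a < b \<longrightarrow> f a < f b"
    proof (cases r)
      case (Node rl c rr)
      then have "find P c = r" using find_child_r[OF bP] fx ax by blast
      then show ?thesis using Node.IH(2) by blast
    qed simp
    show "\<forall>a\<in>set_tree (Node l a0 r). \<forall>b\<in>set_tree (Node l a0 r). a < b \<longrightarrow> f a < f b"
    proof (intro ballI impI)
      fix a b assume a: "a \<in> set_tree (Node l a0 r)" and b: "b \<in> set_tree (Node l a0 r)" and ab: "a < b"
      have lt: "\<forall>y\<in>set_tree l. y < x" "\<forall>y\<in>set_tree r. x < y" using bb by auto
      have a': "a = x \<or> a \<in> set_tree l \<or> a \<in> set_tree r" using a ax by auto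
      have b': "b = x \<or> b \<in> set_tree l \<or> b \<in> set_tree r" using b ax by auto
      show "f a < f b"
      proof (cases "a = x")
        case True
        then show ?thesis using b' ab fl fr lt by auto
      next
        case False
        then have a'': "a \<in> set_tree l \<or> a \<in> set_tree r" using a' by simp
        then show ?thesis
        proof
          assume al: "a \<in> set_tree l"
          from b' show ?thesis
          proof (elim disjE)
            assume "b = x" then show ?thesis using fl al by simp
          next
            assume "b \<in> set_tree l" then show ?thesis using IHl al ab by blast
          next
            assume "b \<in> set_tree r" then show ?thesis using fl fr al by (meson less_trans)
          qed
        next
          assume ar: "a \<in> set_tree r"
          from b' show ?thesis
          proof (elim disjE)
            assume "b = x" then show ?thesis using lt ar ab by auto
          next
            assume "b \<in> set_tree l" then show ?thesis using lt ar ab by (meson less_trans not_less_iff_gr_or_eq)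
          next
            assume "b \<in> set_tree r" then show ?thesis using IHr ar ab by blast
          qed
        qed
      qed
    qed
  qed
qed

lemma valid_inj:
  assumes bP: "bst P" and bT: "bst T" and v: "valid T P e f"
  shows "inj_on f (set_tree P)"
proof (cases P)
  case Leaf
  then show ?thesis by simp
next
  case (Node l a r)
  then have "find P a = P" by simp
  then have m: "\<forall>x\<in>set_tree P. \<forall>y\<in>set_tree P. x < y \<longrightarrow> f x < f y"
    using valid_mono_aux[OF bP bT v] by blast
  show ?thesis
  proof (rule inj_onI)
    fix x y assume "x \<in> set_tree P" "y \<in> set_tree P" "f x = f y"
    then show "x = y" using m by (metis less_irrefl linorder_neqE_nat)
  qed
qed

lemma contains_iff: "bst P \<Longrightarrow> bst T \<Longrightarrow> contains T P e \<longleftrightarrow> (\<exists>f. valid T P e f)"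
  using contains_valid valid_inj by blast


lemmas L_ord = L_less
lemmas R_ord = R_gt

lemma not_L_self: "bst t \<Longrightarrow> x \<notin> Lsub t x"
  using L_less by blast

lemma not_R_self: "bst t \<Longrightarrow> x \<notin> Rsub t x"
  using R_gt by blast

lemma rc_lc_distinct: "bst t \<Longrightarrow> rc t w = Some z \<Longrightarrow> lc t w' = Some z \<Longrightarrow> False"
  using lc_rc_distinct by blast

lemma child_lc: "lc t w = Some z \<Longrightarrow> child t w z"
  by (simp add: child_def)

lemma child_rc: "rc t w = Some z \<Longrightarrow> child t w z"
  by (simp add: child_def)

lemma child_sub: "child t w z \<Longrightarrow> z \<in> Lsub t w \<or> z \<in> Rsub t w"
  unfolding child_def using lc_L rc_R by blast


declare lcit.simps(2)[simp del] rcit.simps(2)[simp del]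

lemma lcit_Suc_Y: "lcit t i (Suc n) = (case lc t i of None \<Rightarrow> None | Some j \<Rightarrow> lcit t j n)"
  by (induction n) (auto simp: lcit.simps split: option.splits)

lemma lcit_Suc_c_Y: "lc t i = Some c \<Longrightarrow> lcit t i (Suc n) = lcit t c n"
  by (simp add: lcit_Suc_Y)

lemma BLp_rec_Y: "j \<in> BL' P e i \<longleftrightarrow> j = i \<or> (\<exists>c. lc P i = Some c \<and> e c \<and> j \<in> BL' P e c)"
proof
  assume "j \<in> BL' P e i"
  then obtain n where n: "lcit P i n = Some j" "\<forall>m\<in>{1..n}. e (the (lcit P i m))"
    by (auto simp: BL'_def)
  show "j = i \<or> (\<exists>c. lc P i = Some c \<and> e c \<and> j \<in> BL' P e c)"
  proof (cases n)
    case 0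
    then show ?thesis using n by simp
  next
    case (Suc n')
    obtain c where c: "lc P i = Some c"
      using n(1) Suc by (cases "lc P i") (auto simp: lcit_Suc_Y)
    have "lcit P c n' = Some j" using n(1) Suc lcit_Suc_c_Y[OF c] by simp
    moreover have "e c" using bspec[OF n(2), of 1] Suc lcit_Suc_c_Y[OF c, of 0] by simp
    moreover have "\<forall>m\<in>{1..n'}. e (the (lcit P c m))"
    proof
      fix m assume "m \<in> {1..n'}"
      then have "Suc m \<in> {1..n}" using Suc by auto
      then show "e (the (lcit P c m))" using n(2) lcit_Suc_c_Y[OF c, of m] by metis
    qed
    ultimately show ?thesis using c by (auto simp: BL'_def)
  qed
next
  assume "j = i \<or> (\<exists>c. lc P i = Some c \<and> e c \<and> j \<in> BL' P e c)"
  then show "j \<in> BL' P e i"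
  proof
    assume "j = i"
    then show ?thesis by (auto simp: BL'_def intro: exI[of _ 0])
  next
    assume "\<exists>c. lc P i = Some c \<and> e c \<and> j \<in> BL' P e c"
    then obtain c n where c: "lc P i = Some c" "e c" "lcit P c n = Some j"
      "\<forall>m\<in>{1..n}. e (the (lcit P c m))" by (auto simp: BL'_def)
    have "lcit P i (Suc n) = Some j" using c lcit_Suc_c_Y[OF c(1)] by simp
    moreover have "\<forall>m\<in>{1..Suc n}. e (the (lcit P i m))"
    proof
      fix m assume m: "m \<in> {1..Suc n}"
      show "e (the (lcit P i m))"
      proof (cases m)
        case 0 then show ?thesis using m by simp
      next
        case (Suc m')
        show ?thesis
        proof (cases m')
          case 0 then show ?thesis using Suc c lcit_Suc_c_Y[OF c(1), of 0] by simp
        next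
          case (Suc m'')
          then show ?thesis using \<open>m = Suc m'\<close> m c(4) lcit_Suc_c_Y[OF c(1), of m'] by auto
        qed
      qed
    qed
    ultimately show ?thesis by (auto simp: BL'_def)
  qed
qed

lemma BLp_induct_Y[consumes 1, case_names base step]:
  assumes "j \<in> BL' P e i"
    and base: "\<And>i. Q i i"
    and step: "\<And>i c j. lc P i = Some c \<Longrightarrow> e c \<Longrightarrow> j \<in> BL' P e c \<Longrightarrow> Q c j \<Longrightarrow> Q i j"
  shows "Q i j"
proof -
  obtain n where n: "lcit P i n = Some j" "\<forall>m\<in>{1..n}. e (the (lcit P i m))"
    using assms(1) by (auto simp: BL'_def)
  have "\<forall>i. lcit P i n = Some j \<and> (\<forall>m\<in>{1..n}. e (the (lcit P i m))) \<longrightarrow> Q i j"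
  proof (induction n)
    case 0
    then show ?case using base by simp
  next
    case (Suc n)
    show ?case
    proof (intro allI impI)
      fix i assume h: "lcit P i (Suc n) = Some j \<and> (\<forall>m\<in>{1..Suc n}. e (the (lcit P i m)))"
      obtain c where c: "lc P i = Some c"
        using h by (cases "lc P i") (auto simp: lcit_Suc_Y)
      have 1: "lcit P c n = Some j" using h lcit_Suc_c_Y[OF c] by simp
      have 2: "e c" using bspec[OF h[THEN conjunct2], of 1] lcit_Suc_c_Y[OF c, of 0] by simp
      have 3: "\<forall>m\<in>{1..n}. e (the (lcit P c m))"
      proof
        fix m assume "m \<in> {1..n}"
        then have "Suc m \<in> {1..Suc n}" by auto
        then show "e (the (lcit P c m))" using h lcit_Suc_c_Y[OF c, of m] by metis
      qed
      have "j \<in> BL' P e c" using 1 3 by (auto simp: BL'_def)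
      then show "Q i j" using step[OF c 2] Suc.IH 1 3 by blast
    qed
  qed
  then show ?thesis using n by blast
qed

lemma BLp_self_Y: "i \<in> BL' P e i"
  using BLp_rec_Y by blast

lemma BLp_S_Y: "j \<in> BL' P e i \<Longrightarrow> bst P \<Longrightarrow> i \<in> set_tree P \<Longrightarrow> j \<in> Ssub P i"
proof (induction rule: BLp_induct_Y)
  case (base i)
  then show ?case using S_self by blast
next
  case (step i c j)
  then have "j \<in> Ssub P c" using lc_in by blast
  then show ?case using lc_S[OF step.prems(1) step.hyps(1)] L_sub_S by blast
qed

lemma BLp_parent_Y: "j \<in> BL' P e i \<Longrightarrow> j \<noteq> i \<Longrightarrow> \<exists>q\<in>BL' P e i. lc P q = Some j \<and> e j"
proof (induction rule: BLp_induct_Y)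
  case (base i)
  then show ?case by simp
next
  case (step i c j)
  have sub: "BL' P e c \<subseteq> BL' P e i" using BLp_rec_Y[of _ P e i] step.hyps(1,2) by blast
  show ?case
  proof (cases "j = c")
    case True
    then show ?thesis using step.hyps BLp_self_Y by blast
  next
    case False
    then show ?thesis using step.IH sub by blast
  qed
qed

lemma BLp_closed_Y: "q \<in> BL' P e i \<Longrightarrow> lc P q = Some j \<Longrightarrow> e j \<Longrightarrow> j \<in> BL' P e i"
proof (induction arbitrary: j rule: BLp_induct_Y)
  case (base i)
  then show ?case using BLp_rec_Y[of j P e i] BLp_self_Y by blast
next
  case (step i c q)
  then have "j \<in> BL' P e c" by blast
  then show ?case using BLp_rec_Y[of j P e i] step.hyps by blast
qed

lemma BLp_not_child_Y: "bst P \<Longrightarrow> i \<in> set_tree P \<Longrightarrow> q \<in> BL' P e i \<Longrightarrow> \<not> child P q i"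
proof
  assume b: "bst P" and i: "i \<in> set_tree P" and q: "q \<in> BL' P e i" and c: "child P q i"
  have qi: "q \<in> Ssub P i" using BLp_S_Y[OF q b i] .
  have "i \<in> Ssub P q" using child_sub[OF c] L_sub_S R_sub_S by blast
  then have "q = i" using S_antisym[OF b] qi by blast
  then show False using child_sub[OF c] not_L_self[OF b] not_R_self[OF b] by blast
qed

lemma rcit_Suc_A_Y: "rcit t i (Suc n) = (case rc t i of None \<Rightarrow> None | Some j \<Rightarrow> rcit t j n)"
  by (induction n) (auto simp: rcit.simps split: option.splits)

lemma rcit_Suc_c_A_Y: "rc t i = Some c \<Longrightarrow> rcit t i (Suc n) = rcit t c n"
  by (simp add: rcit_Suc_A_Y)

lemma AR_rec_Y: "a \<in> AR P e p \<longleftrightarrow> a \<in> set_tree P \<and> (a = p \<or> (\<exists>a2. rc P a = Some a2 \<and> e a2 \<and> a2 \<in> AR P e p))"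
proof
  assume "a \<in> AR P e p"
  then obtain n where a: "a \<in> set_tree P" and n: "rcit P a n = Some p" "\<forall>m\<in>{1..n}. e (the (rcit P a m))"
    by (auto simp: AR_def)
  show "a \<in> set_tree P \<and> (a = p \<or> (\<exists>a2. rc P a = Some a2 \<and> e a2 \<and> a2 \<in> AR P e p))"
  proof (cases n)
    case 0
    then show ?thesis using n a by simp
  next
    case (Suc n')
    obtain c where c: "rc P a = Some c"
      using n(1) Suc by (cases "rc P a") (auto simp: rcit_Suc_A_Y)
    have "rcit P c n' = Some p" using n(1) Suc rcit_Suc_c_A_Y[OF c] by simp
    moreover have "e c" using bspec[OF n(2), of 1] Suc rcit_Suc_c_A_Y[OF c, of 0] by simp
    moreover have "\<forall>m\<in>{1..n'}. e (the (rcit P c m))"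
    proof
      fix m assume "m \<in> {1..n'}"
      then have "Suc m \<in> {1..n}" using Suc by auto
      then show "e (the (rcit P c m))" using n(2) rcit_Suc_c_A_Y[OF c, of m] by metis
    qed
    moreover have "c \<in> set_tree P" using rc_in[OF c] by blast
    ultimately show ?thesis using c a by (auto simp: AR_def)
  qed
next
  assume h: "a \<in> set_tree P \<and> (a = p \<or> (\<exists>a2. rc P a = Some a2 \<and> e a2 \<and> a2 \<in> AR P e p))"
  then have a: "a \<in> set_tree P" by blast
  from h have "a = p \<or> (\<exists>a2. rc P a = Some a2 \<and> e a2 \<and> a2 \<in> AR P e p)" by blast
  then show "a \<in> AR P e p"
  proof
    assume "a = p"
    then show ?thesis using a by (auto simp: AR_def intro: exI[of _ 0])
  next
    assume "\<exists>a2. rc P a = Some a2 \<and> e a2 \<and> a2 \<in> AR P e p"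
    then obtain c n where c: "rc P a = Some c" "e c" "rcit P c n = Some p"
      "\<forall>m\<in>{1..n}. e (the (rcit P c m))" by (auto simp: AR_def)
    have "rcit P a (Suc n) = Some p" using c rcit_Suc_c_A_Y[OF c(1)] by simp
    moreover have "\<forall>m\<in>{1..Suc n}. e (the (rcit P a m))"
    proof
      fix m assume m: "m \<in> {1..Suc n}"
      show "e (the (rcit P a m))"
      proof (cases m)
        case 0 then show ?thesis using m by simp
      next
        case (Suc m')
        show ?thesis
        proof (cases m')
          case 0 then show ?thesis using Suc c rcit_Suc_c_A_Y[OF c(1), of 0] by simp
        next
          case (Suc m'')
          then show ?thesis using \<open>m = Suc m'\<close> m c(4) rcit_Suc_c_A_Y[OF c(1), of m'] by auto
        qed
      qed
    qed
    ultimately show ?thesis using a by (auto simp: AR_def)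
  qed
qed

lemma AR_induct_Y[consumes 1, case_names base step]:
  assumes "a \<in> AR P e p"
    and base: "p \<in> set_tree P \<Longrightarrow> Q p"
    and step: "\<And>a a2. rc P a = Some a2 \<Longrightarrow> e a2 \<Longrightarrow> a2 \<in> AR P e p \<Longrightarrow> Q a2 \<Longrightarrow> Q a"
  shows "Q a"
proof -
  obtain n where a: "a \<in> set_tree P" and n: "rcit P a n = Some p" "\<forall>m\<in>{1..n}. e (the (rcit P a m))"
    using assms(1) by (auto simp: AR_def)
  have "\<forall>a. a \<in> set_tree P \<and> rcit P a n = Some p \<and> (\<forall>m\<in>{1..n}. e (the (rcit P a m))) \<longrightarrow> Q a"
  proof (induction n)
    case 0
    then show ?case using base by simp
  next
    case (Suc n)
    show ?case
    proof (intro allI impI)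
      fix a assume h: "a \<in> set_tree P \<and> rcit P a (Suc n) = Some p \<and> (\<forall>m\<in>{1..Suc n}. e (the (rcit P a m)))"
      obtain c where c: "rc P a = Some c"
        using h by (cases "rc P a") (auto simp: rcit_Suc_A_Y)
      have 1: "rcit P c n = Some p" using h rcit_Suc_c_A_Y[OF c] by simp
      have 2: "e c" using bspec[OF h[THEN conjunct2, THEN conjunct2], of 1] rcit_Suc_c_A_Y[OF c, of 0] by simp
      have 3: "\<forall>m\<in>{1..n}. e (the (rcit P c m))"
      proof
        fix m assume "m \<in> {1..n}"
        then have "Suc m \<in> {1..Suc n}" by auto
        then show "e (the (rcit P c m))" using h rcit_Suc_c_A_Y[OF c, of m] by metis
      qed
      have cP: "c \<in> set_tree P" using rc_in[OF c] by blast
      have "c \<in> AR P e p" using 1 3 cP by (auto simp: AR_def)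
      then show "Q a" using step[OF c 2] Suc.IH 1 3 cP by blast
    qed
  qed
  then show ?thesis using n a by blast
qed

lemma AR_self_Y: "p \<in> set_tree P \<Longrightarrow> p \<in> AR P e p"
  using AR_rec_Y by blast

lemma AR_S_Y: "a \<in> AR P e p \<Longrightarrow> bst P \<Longrightarrow> p \<in> Ssub P a"
proof (induction rule: AR_induct_Y)
  case base
  then show ?case using S_self by blast
next
  case (step a a2)
  then show ?case using rc_S[OF step.prems step.hyps(1)] R_sub_S by blast
qed

lemma AR_step_Y: "a \<in> AR P e p \<Longrightarrow> a \<noteq> p \<Longrightarrow> \<exists>a2. rc P a = Some a2 \<and> e a2 \<and> a2 \<in> AR P e p"
  using AR_rec_Y by blast

lemma AR_closed_Y: "a2 \<in> AR P e p \<Longrightarrow> rc P a = Some a2 \<Longrightarrow> e a2 \<Longrightarrow> a \<in> AR P e p"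
  using AR_rec_Y[of a P e p] rc_in by blast

lemma i_notin_AR_Y: "bst P \<Longrightarrow> rc P p = Some i \<Longrightarrow> i \<notin> AR P e p"
proof
  assume b: "bst P" and pi: "rc P p = Some i" and iA: "i \<in> AR P e p"
  have "p \<in> Ssub P i" using AR_S_Y[OF iA b] .
  moreover have "i \<in> Ssub P p" using rc_R[OF pi] R_sub_S by blast
  ultimately have "p = i" using S_antisym[OF b] by blast
  then show False using rc_R[OF pi] not_R_self[OF b] by simp
qed

lemma AR_top_Y:
  assumes b: "bst P" and j: "j \<in> AR P e p" and q: "lc P q = Some j"
  shows "aR P e p = j"
proof -
  have claim: "a \<in> Ssub P j \<or> (\<exists>w. rc P w = Some j)" if a: "a \<in> AR P e p" for a
    using a
  proof (induction rule: AR_induct_Y)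
    case base
    then show ?case using AR_S_Y[OF j b] by blast
  next
    case (step a a2)
    show ?case
    proof (cases "\<exists>w. rc P w = Some j")
      case True
      then show ?thesis by blast
    next
      case False
      then have a2j: "a2 \<in> Ssub P j" using step.IH by blast
      have "a2 \<noteq> j" using False step.hyps(1) by blast
      then obtain w where w: "w \<in> Ssub P j" "child P w a2" using parent_between[OF b a2j] by blast
      have "w = a" using parent_unique[OF b w(2) child_rc[OF step.hyps(1)]] .
      then show ?thesis using w by blast
    qed
  qed
  have noR: "\<not> (\<exists>w. rc P w = Some j)" using lc_rc_distinct[OF b q] by blast
  have all: "\<forall>a\<in>AR P e p. a \<in> Ssub P j" using claim noR by blast
  have m1: "aR P e p \<in> AR P e p" unfolding aR_def by (rule arg_min_natI[of _ j]) (rule j)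
  have m2: "depth P (aR P e p) \<le> depth P j" unfolding aR_def by (rule arg_min_nat_le) (rule j)
  show ?thesis
  proof (rule ccontr)
    assume "aR P e p \<noteq> j"
    then have "depth P j < depth P (aR P e p)" using depth_less[OF b] all m1 by blast
    then show False using m2 by simp
  qed
qed

lemma finish_Y:
  assumes b: "bst P" and v: "valid T P e f" and pi: "rc P p = Some i" and t: "rc T (f p) = Some (f i)"
  shows "valid T P (e(i := True)) f"
proof (rule validI)
  show "f ` set_tree P \<subseteq> set_tree T" using v valid_def by blast
next
  fix q j assume qj: "lc P q = Some j"
  then have "j \<noteq> i" using lc_rc_distinct[OF b qj] pi by blast
  then show "if (e(i := True)) j then lc T (f q) = Some (f j) else f j \<in> Lsub T (f q)"
    using valid_lc[OF v qj] by simp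
next
  fix q j assume qj: "rc P q = Some j"
  show "if (e(i := True)) j then rc T (f q) = Some (f j) else f j \<in> Rsub T (f q)"
  proof (cases "j = i")
    case True
    then have "q = p" using parent_unique[OF b child_rc[OF qj[unfolded True]] child_rc[OF pi]] by simp
    then show ?thesis using True t by simp
  next
    case False
    then show ?thesis using valid_rc[OF v qj] by simp
  qed
qed

lemma moveB_Y:
  assumes bP: "bst P" and bT: "bst T" and v: "valid T P e f" and ne: "\<not> e i"
    and pi: "rc P p = Some i" and Bc: "\<forall>j\<in>BL' P e i. rc P j = None"
    and w: "lc T w = Some (f i)" and wR: "w \<in> Rsub T (f p)"
  shows "\<exists>g. valid T P e g \<and> g i = w \<and> g p = f p"
proof -
  define tp where "tp z = (SOME w. lc T w = Some z)" for z
  define g where "g x = (if x \<in> BL' P e i then tp (f x) else f x)" for x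
  have iP: "i \<in> set_tree P" using rc_in[OF pi] by blast
  have ex: "\<exists>w. lc T w = Some (f b)" if b: "b \<in> BL' P e i" for b
  proof (cases "b = i")
    case True
    then show ?thesis using w by blast
  next
    case False
    then obtain q where "q \<in> BL' P e i" "lc P q = Some b" "e b" using BLp_parent_Y[OF b] by blast
    then show ?thesis using valid_lc[OF v, of q b] by auto
  qed
  have tpc: "lc T (tp (f b)) = Some (f b)" if b: "b \<in> BL' P e i" for b
    unfolding tp_def using someI_ex[OF ex[OF b]] .
  have tpi: "tp (f i) = w"
    using parent_unique[OF bT child_lc[OF tpc[OF BLp_self_Y]] child_lc[OF w]] .
  have pB: "p \<notin> BL' P e i" using BLp_not_child_Y[OF bP iP] child_rc[OF pi] by blast
  have gi: "g i = w" using tpi BLp_self_Y by (simp add: g_def)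
  have gp: "g p = f p" using pB by (simp add: g_def)
  have "valid T P e g"
  proof (rule validI)
    show "g ` set_tree P \<subseteq> set_tree T"
    proof
      fix y assume "y \<in> g ` set_tree P"
      then obtain x where x: "x \<in> set_tree P" "y = g x" by blast
      show "y \<in> set_tree T"
      proof (cases "x \<in> BL' P e i")
        case True
        then show ?thesis using x lc_in[OF tpc[OF True]] by (simp add: g_def)
      next
        case False
        then show ?thesis using x valid_img[OF v] by (simp add: g_def)
      qed
    qed
  next
    fix q j assume qj: "lc P q = Some j"
    have ji: "j \<noteq> i" using lc_rc_distinct[OF bP qj] pi by blast
    show "if e j then lc T (g q) = Some (g j) else g j \<in> Lsub T (g q)"
    proof (cases "q \<in> BL' P e i")
      case qB: True
      show ?thesis
      proof (cases "e j")
        case True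
        then have jB: "j \<in> BL' P e i" using BLp_closed_Y[OF qB qj] by blast
        have "lc T (f q) = Some (f j)" using valid_lc[OF v qj] True by simp
        then have "tp (f j) = f q" using parent_unique[OF bT child_lc[OF tpc[OF jB]]] child_lc by blast
        then have "g j = f q" using jB by (simp add: g_def)
        then show ?thesis using True tpc[OF qB] qB by (simp add: g_def)
      next
        case False
        have jB: "j \<notin> BL' P e i"
        proof
          assume jB: "j \<in> BL' P e i"
          then obtain q' where "lc P q' = Some j" "e j" using BLp_parent_Y[OF jB ji] by blast
          then show False using False by simp
        qed
        have "f j \<in> Lsub T (f q)" using valid_L[OF v qj] .
        moreover have "Ssub T (f q) = Lsub T (tp (f q))" using lc_S[OF bT tpc[OF qB]] .
        ultimately have "f j \<in> Lsub T (tp (f q))" using L_sub_S by blast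
        then show ?thesis using False jB qB by (simp add: g_def)
      qed
    next
      case qB: False
      have jB: "j \<notin> BL' P e i"
      proof
        assume jB: "j \<in> BL' P e i"
        then obtain q' where q': "q' \<in> BL' P e i" "lc P q' = Some j" using BLp_parent_Y[OF jB ji] by blast
        then have "q' = q" using parent_unique[OF bP child_lc[OF q'(2)] child_lc[OF qj]] by simp
        then show False using q' qB by simp
      qed
      then show ?thesis using valid_lc[OF v qj] qB by (simp add: g_def)
    qed
  next
    fix q j assume qj: "rc P q = Some j"
    show "if e j then rc T (g q) = Some (g j) else g j \<in> Rsub T (g q)"
    proof (cases "q \<in> BL' P e i")
      case True
      then show ?thesis using Bc qj by simp
    next
      case qB: False
      show ?thesis
      proof (cases "j \<in> BL' P e i")
        case jB: True
        show ?thesis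
        proof (cases "j = i")
          case True
          then have "q = p" using parent_unique[OF bP child_rc[OF qj[unfolded True]] child_rc[OF pi]] by simp
          then show ?thesis using True ne gi gp wR by simp
        next
          case False
          then obtain q' where q': "lc P q' = Some j" using BLp_parent_Y[OF jB] by blast
          then show ?thesis using lc_rc_distinct[OF bP q' qj] by blast
        qed
      next
        case False
        then show ?thesis using valid_rc[OF v qj] qB by (simp add: g_def)
      qed
    qed
  qed
  then show ?thesis using gi gp by blast
qed

lemma moveA_Y:
  assumes bP: "bst P" and bT: "bst T" and v: "valid T P e f"
    and pi: "rc P p = Some i" and lp: "lc P p = None" and top: "\<forall>q. child P q p \<longrightarrow> \<not> e p"
    and w: "rc T w = Some (f i)" and wR: "w \<in> Rsub T (f p)"
  shows "valid T P (e(i := True)) (f(p := w))"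
proof -
  have ip: "i \<noteq> p" using rc_R[OF pi] not_R_self[OF bP] by auto
  have wS: "w \<in> Ssub T (f p)" using wR R_sub_S by blast
  show ?thesis
  proof (rule validI)
    show "(f(p := w)) ` set_tree P \<subseteq> set_tree T"
      using valid_img[OF v] R_in[OF wR] by auto
  next
    fix q j assume qj: "lc P q = Some j"
    have ji: "j \<noteq> i" using lc_rc_distinct[OF bP qj] pi by blast
    have qp: "q \<noteq> p" using qj lp by auto
    show "if (e(i := True)) j then lc T ((f(p := w)) q) = Some ((f(p := w)) j) else (f(p := w)) j \<in> Lsub T ((f(p := w)) q)"
    proof (cases "j = p")
      case True
      then have "\<not> e p" using top child_lc[OF qj] by blast
      moreover have "w \<in> Lsub T (f q)" using L_trans[OF bT valid_L[OF v qj]] wS True by blast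
      ultimately show ?thesis using True qp ji by simp
    next
      case False
      then show ?thesis using valid_lc[OF v qj] qp ji by simp
    qed
  next
    fix q j assume qj: "rc P q = Some j"
    show "if (e(i := True)) j then rc T ((f(p := w)) q) = Some ((f(p := w)) j) else (f(p := w)) j \<in> Rsub T ((f(p := w)) q)"
    proof (cases "j = i")
      case True
      then have "q = p" using parent_unique[OF bP child_rc[OF qj[unfolded True]] child_rc[OF pi]] by simp
      then show ?thesis using True w ip by simp
    next
      case ji: False
      have qp: "q \<noteq> p" using qj pi ji by auto
      show ?thesis
      proof (cases "j = p")
        case True
        then have "\<not> e p" using top child_rc[OF qj] by blast
        moreover have "w \<in> Rsub T (f q)" using R_trans[OF bT valid_R[OF v qj]] wS True by blast
        ultimately show ?thesis using True qp ji by simp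
      next
        case False
        then show ?thesis using valid_rc[OF v qj] qp ji by simp
      qed
    qed
  qed
qed

lemma shift_Y:
  assumes bP: "bst P" and bT: "bst T" and v: "valid T P e f" and ne: "\<not> e i"
    and pi: "rc P p = Some i" and Al: "\<forall>a\<in>AR P e p. lc P a = None"
    and top: "Some (aR P e p) = root_of P \<or> \<not> e (aR P e p)"
    and y: "rc T (f p) = Some y" and iy: "f i \<in> Rsub T y"
  shows "\<exists>g. valid T P e g \<and> g p = y \<and> g i = f i"
proof -
  define g where "g x = (if x \<in> AR P e p then the (rc T (f x)) else f x)" for x
  have pA: "p \<in> AR P e p" using AR_self_Y rc_in[OF pi] by blast
  have iA: "i \<notin> AR P e p" using i_notin_AR_Y[OF bP pi] .
  have ex: "rc T (f a) \<noteq> None" if a: "a \<in> AR P e p" for a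
  proof (cases "a = p")
    case True
    then show ?thesis using y by simp
  next
    case False
    then obtain a2 where "rc P a = Some a2" "e a2" using AR_step_Y[OF a] by blast
    then show ?thesis using valid_rc[OF v, of a a2] by auto
  qed
  have gc: "rc T (f a) = Some (g a)" if a: "a \<in> AR P e p" for a
    using ex[OF a] a by (auto simp: g_def)
  have gp: "g p = y" using gc[OF pA] y by simp
  have gi: "g i = f i" using iA by (simp add: g_def)
  have "valid T P e g"
  proof (rule validI)
    show "g ` set_tree P \<subseteq> set_tree T"
    proof
      fix z assume "z \<in> g ` set_tree P"
      then obtain x where x: "x \<in> set_tree P" "z = g x" by blast
      show "z \<in> set_tree T"
      proof (cases "x \<in> AR P e p")
        case True
        then show ?thesis using x rc_in[OF gc[OF True]] by simp
      next
        case False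
        then show ?thesis using x valid_img[OF v] by (simp add: g_def)
      qed
    qed
  next
    fix q j assume qj: "lc P q = Some j"
    have qA: "q \<notin> AR P e p" using Al qj by auto
    show "if e j then lc T (g q) = Some (g j) else g j \<in> Lsub T (g q)"
    proof (cases "j \<in> AR P e p")
      case True
      then have "aR P e p = j" using AR_top_Y[OF bP True qj] by blast
      moreover have "root_of P \<noteq> Some j" using child_ne_root[OF bP child_lc[OF qj]] .
      ultimately have nej: "\<not> e j" using top by auto
      have "g j \<in> Ssub T (f j)" using rc_R[OF gc[OF True]] R_sub_S by blast
      then have "g j \<in> Lsub T (f q)" using L_trans[OF bT valid_L[OF v qj]] by blast
      then show ?thesis using nej qA by (simp add: g_def)
    next
      case False
      then show ?thesis using valid_lc[OF v qj] qA by (simp add: g_def)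
    qed
  next
    fix q j assume qj: "rc P q = Some j"
    show "if e j then rc T (g q) = Some (g j) else g j \<in> Rsub T (g q)"
    proof (cases "q \<in> AR P e p")
      case qA: True
      show ?thesis
      proof (cases "q = p")
        case True
        then have "j = i" using qj pi by simp
        then show ?thesis using ne gi gp iy True by simp
      next
        case False
        then obtain a2 where a2: "rc P q = Some a2" "e a2" "a2 \<in> AR P e p" using AR_step_Y[OF qA] by blast
        then have ja: "j = a2" using qj by simp
        have "rc T (f q) = Some (f j)" using valid_rc[OF v qj] a2 ja by simp
        then have "g q = f j" using gc[OF qA] by simp
        then show ?thesis using gc[OF a2(3)] ja a2 by simp
      qed
    next
      case qA: False
      show ?thesis
      proof (cases "j \<in> AR P e p")
        case True
        then have nej: "\<not> e j" using AR_closed_Y[OF True qj] qA by blast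
        have "g j \<in> Ssub T (f j)" using rc_R[OF gc[OF True]] R_sub_S by blast
        then have "g j \<in> Rsub T (f q)" using R_trans[OF bT valid_R[OF v qj]] by blast
        then show ?thesis using nej qA by (simp add: g_def)
      next
        case False
        then show ?thesis using valid_rc[OF v qj] qA by (simp add: g_def)
      qed
    qed
  qed
  then show ?thesis using gp gi by blast
qed


lemma case_m0_Y:
  assumes bP: "bst P" and bT: "bst T" and ne: "\<not> e i"
    and pi: "rc P p = Some i" and lp: "lc P p = None" and top: "\<forall>q. child P q p \<longrightarrow> \<not> e p"
    and Bc: "\<forall>j\<in>BL' P e i. rc P j = None"
  shows "valid T P e f \<Longrightarrow> \<exists>g. valid T P (e(i := True)) g"
proof (induction "card (set_tree T) - card (Ssub T (f i))" arbitrary: f rule: less_induct)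
  case less
  have v: "valid T P e f" by fact
  have fiR: "f i \<in> Rsub T (f p)" using valid_R[OF v pi] .
  obtain y where y: "rc T (f p) = Some y" using R_nonempty[OF fiR] by blast
  have Ry: "Rsub T (f p) = Ssub T y" using rc_S[OF bT y] by simp
  show ?case
  proof (cases "f i = y")
    case True
    then show ?thesis using finish_Y[OF bP v pi] y by auto
  next
    case False
    have fiy: "f i \<in> Ssub T y" using fiR Ry by simp
    obtain w where w: "w \<in> Ssub T y" "child T w (f i)" using parent_between[OF bT fiy False] by blast
    have wR: "w \<in> Rsub T (f p)" using w(1) Ry by simp
    show ?thesis
    proof (cases "lc T w = Some (f i)")
      case True
      obtain g where g: "valid T P e g" "g i = w" "g p = f p"
        using moveB_Y[OF bP bT v ne pi Bc True wR] by blast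
      have wT: "w \<in> set_tree T" using lc_in[OF True] by blast
      have s1: "Ssub T (f i) = Lsub T w" using lc_S[OF bT True] .
      have s2: "Lsub T w \<subset> Ssub T w" using L_sub_S S_self[OF wT] not_L_self[OF bT] by blast
      have fin: "finite (Ssub T w)" using S_subset finite_subset by (metis finite_set_tree)
      have "card (Ssub T (f i)) < card (Ssub T w)" using s1 s2 fin psubset_card_mono by metis
      moreover have "card (Ssub T w) \<le> card (set_tree T)" using S_subset card_mono by (metis finite_set_tree)
      ultimately have "card (set_tree T) - card (Ssub T (g i)) < card (set_tree T) - card (Ssub T (f i))"
        using g(2) by simp
      then show ?thesis using less.hyps g(1) by blast
    next
      case False
      then have "rc T w = Some (f i)" using w(2) by (simp add: child_def)
      then show ?thesis using moveA_Y[OF bP bT v pi lp top _ wR] by blast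
    qed
  qed
qed

lemma case_s0_Y:
  assumes bP: "bst P" and bT: "bst T" and ne: "\<not> e i"
    and pi: "rc P p = Some i" and lic: "lc P i = Some c" and nc: "\<not> e c" and ri: "rc P i = None"
    and Al: "\<forall>a\<in>AR P e p. lc P a = None"
    and top: "Some (aR P e p) = root_of P \<or> \<not> e (aR P e p)"
  shows "valid T P e f \<Longrightarrow> \<exists>g. valid T P (e(i := True)) g"
proof (induction "card (Rsub T (f p))" arbitrary: f rule: less_induct)
  case less
  have v: "valid T P e f" by fact
  have fiR: "f i \<in> Rsub T (f p)" using valid_R[OF v pi] .
  obtain y where y: "rc T (f p) = Some y" using R_nonempty[OF fiR] by blast
  have Ry: "Rsub T (f p) = Ssub T y" using rc_S[OF bT y] by simp
  have yT: "y \<in> set_tree T" using rc_in[OF y] by blast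
  have fiy: "f i \<in> Ssub T y" using fiR Ry by simp
  have ip: "i \<noteq> p" using rc_R[OF pi] not_R_self[OF bP] by auto
  have ci: "c \<noteq> i" using lc_L[OF lic] not_L_self[OF bP] by auto
  show ?case
  proof (cases "f i = y")
    case True
    then show ?thesis using finish_Y[OF bP v pi] y by auto
  next
    case False
    then have "f i \<in> Lsub T y \<or> f i \<in> Rsub T y" using fiy S_decomp[OF yT] by blast
    then show ?thesis
    proof
      assume iL: "f i \<in> Lsub T y"
      have "valid T P (e(i := True)) (f(i := y))"
      proof (rule validI)
        show "(f(i := y)) ` set_tree P \<subseteq> set_tree T" using valid_img[OF v] yT by auto
      next
        fix q j assume qj: "lc P q = Some j"
        have ji: "j \<noteq> i" using lc_rc_distinct[OF bP qj] pi by blast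
        show "if (e(i := True)) j then lc T ((f(i := y)) q) = Some ((f(i := y)) j) else (f(i := y)) j \<in> Lsub T ((f(i := y)) q)"
        proof (cases "q = i")
          case True
          then have jc: "j = c" using qj lic by simp
          have "f c \<in> Lsub T (f i)" using valid_L[OF v lic] .
          then have "f c \<in> Lsub T y" using L_trans[OF bT iL] L_sub_S by blast
          then show ?thesis using True jc nc ci by simp
        next
          case False
          then show ?thesis using valid_lc[OF v qj] ji by simp
        qed
      next
        fix q j assume qj: "rc P q = Some j"
        have qi: "q \<noteq> i" using qj ri by auto
        show "if (e(i := True)) j then rc T ((f(i := y)) q) = Some ((f(i := y)) j) else (f(i := y)) j \<in> Rsub T ((f(i := y)) q)"
        proof (cases "j = i")
          case True
          then have "q = p" using parent_unique[OF bP child_rc[OF qj[unfolded True]] child_rc[OF pi]] by simp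
          then show ?thesis using True y ip by simp
        next
          case False
          then show ?thesis using valid_rc[OF v qj] qi by simp
        qed
      qed
      then show ?thesis by blast
    next
      assume iR: "f i \<in> Rsub T y"
      obtain g where g: "valid T P e g" "g p = y" "g i = f i"
        using shift_Y[OF bP bT v ne pi Al top y iR] by blast
      have fin: "finite (Rsub T (f p))" using R_in[of _ T "f p"] finite_subset[of "Rsub T (f p)" "set_tree T"] finite_set_tree by blast
      have "Rsub T y \<subset> Rsub T (f p)" using Ry R_sub_S[of T y] rc_R[OF y] not_R_self[OF bT] by blast
      then have "card (Rsub T (g p)) < card (Rsub T (f p))" using g(2) fin psubset_card_mono by metis
      then show ?thesis using less.hyps g(1) by blast
    qed
  qed
qed

lemma Yset_case_Y:
  assumes bP: "bst P" and bT: "bst T" and v: "valid T P e f" and iY: "i \<in> Yset P e" and ne: "\<not> e i"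
  shows "\<exists>g. valid T P (e(i := True)) g"
proof -
  obtain p where ic: "lc P i \<noteq> None" and pi: "rc P p = Some i"
    and alt: "AR P e p = {p} \<or> BL' P e i = {i}"
    and Al: "\<forall>j\<in>AR P e p. lc P j = None" and Bc: "\<forall>j\<in>BL' P e i. rc P j = None"
    and top: "Some (aR P e p) = root_of P \<or> \<not> e (aR P e p)"
    using iY unfolding Yset_def by blast
  have pA: "p \<in> AR P e p" using AR_self_Y rc_in[OF pi] by blast
  show ?thesis
  proof (cases "AR P e p = {p}")
    case True
    have "aR P e p \<in> AR P e p" unfolding aR_def by (rule arg_min_natI[of _ p]) (rule pA)
    then have ap: "aR P e p = p" using True by blast
    have lp: "lc P p = None" using Al pA by blast
    have top': "\<forall>q. child P q p \<longrightarrow> \<not> e p"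
      using top ap child_ne_root[OF bP] by metis
    show ?thesis using case_m0_Y[OF bP bT ne pi lp top' Bc v] .
  next
    case False
    then have B: "BL' P e i = {i}" using alt by blast
    obtain c where lic: "lc P i = Some c" using ic by blast
    have ci: "c \<noteq> i" using lc_L[OF lic] not_L_self[OF bP] by auto
    have nc: "\<not> e c"
    proof
      assume "e c"
      then have "c \<in> BL' P e i" using BLp_rec_Y[of c P e i] lic BLp_self_Y by blast
      then show False using B ci by blast
    qed
    have ri: "rc P i = None" using Bc BLp_self_Y by blast
    show ?thesis using case_s0_Y[OF bP bT ne pi lic nc ri Al top v] .
  qed
qed

lemma leaf_Y:
  assumes bP: "bst P" and bT: "bst T" and v: "valid T P e f"
    and li: "lc P i = None" and ri: "rc P i = None" and qi: "lc P q = Some i" and ne: "\<not> e i"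
  shows "\<exists>g. valid T P (e(i := True)) g"
proof -
  have "f i \<in> Lsub T (f q)" using valid_L[OF v qi] .
  then obtain c where c: "lc T (f q) = Some c" using L_nonempty by blast
  have iq: "q \<noteq> i" using lc_L[OF qi] not_L_self[OF bP] by auto
  have "valid T P (e(i := True)) (f(i := c))"
  proof (rule validI)
    show "(f(i := c)) ` set_tree P \<subseteq> set_tree T" using valid_img[OF v] lc_in[OF c] by auto
  next
    fix p j assume pj: "lc P p = Some j"
    have pi: "p \<noteq> i" using pj li by auto
    show "if (e(i := True)) j then lc T ((f(i := c)) p) = Some ((f(i := c)) j) else (f(i := c)) j \<in> Lsub T ((f(i := c)) p)"
    proof (cases "j = i")
      case True
      then have "p = q" using parent_unique[OF bP child_lc[OF pj[unfolded True]] child_lc[OF qi]] by simp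
      then show ?thesis using True c iq by simp
    next
      case False
      then show ?thesis using valid_lc[OF v pj] pi by simp
    qed
  next
    fix p j assume pj: "rc P p = Some j"
    have pi: "p \<noteq> i" using pj ri by auto
    have ji: "j \<noteq> i" using rc_lc_distinct[OF bP pj] qi by blast
    show "if (e(i := True)) j then rc T ((f(i := c)) p) = Some ((f(i := c)) j) else (f(i := c)) j \<in> Rsub T ((f(i := c)) p)"
      using valid_rc[OF v pj] pi ji by simp
  qed
  then show ?thesis by blast
qed


declare rcit.simps(2)[simp del] lcit.simps(2)[simp del]

lemma rcit_Suc_Yp: "rcit t i (Suc n) = (case rc t i of None \<Rightarrow> None | Some j \<Rightarrow> rcit t j n)"
  by (induction n) (auto simp: rcit.simps split: option.splits)

lemma rcit_Suc_c_Yp: "rc t i = Some c \<Longrightarrow> rcit t i (Suc n) = rcit t c n"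
  by (simp add: rcit_Suc_Yp)

lemma BRp_rec_Yp: "j \<in> BR' P e i \<longleftrightarrow> j = i \<or> (\<exists>c. rc P i = Some c \<and> e c \<and> j \<in> BR' P e c)"
proof
  assume "j \<in> BR' P e i"
  then obtain n where n: "rcit P i n = Some j" "\<forall>m\<in>{1..n}. e (the (rcit P i m))"
    by (auto simp: BR'_def)
  show "j = i \<or> (\<exists>c. rc P i = Some c \<and> e c \<and> j \<in> BR' P e c)"
  proof (cases n)
    case 0
    then show ?thesis using n by simp
  next
    case (Suc n')
    obtain c where c: "rc P i = Some c"
      using n(1) Suc by (cases "rc P i") (auto simp: rcit_Suc_Yp)
    have "rcit P c n' = Some j" using n(1) Suc rcit_Suc_c_Yp[OF c] by simp
    moreover have "e c" using bspec[OF n(2), of 1] Suc rcit_Suc_c_Yp[OF c, of 0] by simp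
    moreover have "\<forall>m\<in>{1..n'}. e (the (rcit P c m))"
    proof
      fix m assume "m \<in> {1..n'}"
      then have "Suc m \<in> {1..n}" using Suc by auto
      then show "e (the (rcit P c m))" using n(2) rcit_Suc_c_Yp[OF c, of m] by metis
    qed
    ultimately show ?thesis using c by (auto simp: BR'_def)
  qed
next
  assume "j = i \<or> (\<exists>c. rc P i = Some c \<and> e c \<and> j \<in> BR' P e c)"
  then show "j \<in> BR' P e i"
  proof
    assume "j = i"
    then show ?thesis by (auto simp: BR'_def intro: exI[of _ 0])
  next
    assume "\<exists>c. rc P i = Some c \<and> e c \<and> j \<in> BR' P e c"
    then obtain c n where c: "rc P i = Some c" "e c" "rcit P c n = Some j"
      "\<forall>m\<in>{1..n}. e (the (rcit P c m))" by (auto simp: BR'_def)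
    have "rcit P i (Suc n) = Some j" using c rcit_Suc_c_Yp[OF c(1)] by simp
    moreover have "\<forall>m\<in>{1..Suc n}. e (the (rcit P i m))"
    proof
      fix m assume m: "m \<in> {1..Suc n}"
      show "e (the (rcit P i m))"
      proof (cases m)
        case 0 then show ?thesis using m by simp
      next
        case (Suc m')
        show ?thesis
        proof (cases m')
          case 0 then show ?thesis using Suc c rcit_Suc_c_Yp[OF c(1), of 0] by simp
        next
          case (Suc m'')
          then show ?thesis using \<open>m = Suc m'\<close> m c(4) rcit_Suc_c_Yp[OF c(1), of m'] by auto
        qed
      qed
    qed
    ultimately show ?thesis by (auto simp: BR'_def)
  qed
qed

lemma BRp_induct_Yp[consumes 1, case_names base step]:
  assumes "j \<in> BR' P e i"
    and base: "\<And>i. Q i i"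
    and step: "\<And>i c j. rc P i = Some c \<Longrightarrow> e c \<Longrightarrow> j \<in> BR' P e c \<Longrightarrow> Q c j \<Longrightarrow> Q i j"
  shows "Q i j"
proof -
  obtain n where n: "rcit P i n = Some j" "\<forall>m\<in>{1..n}. e (the (rcit P i m))"
    using assms(1) by (auto simp: BR'_def)
  have "\<forall>i. rcit P i n = Some j \<and> (\<forall>m\<in>{1..n}. e (the (rcit P i m))) \<longrightarrow> Q i j"
  proof (induction n)
    case 0
    then show ?case using base by simp
  next
    case (Suc n)
    show ?case
    proof (intro allI impI)
      fix i assume h: "rcit P i (Suc n) = Some j \<and> (\<forall>m\<in>{1..Suc n}. e (the (rcit P i m)))"
      obtain c where c: "rc P i = Some c"
        using h by (cases "rc P i") (auto simp: rcit_Suc_Yp)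
      have 1: "rcit P c n = Some j" using h rcit_Suc_c_Yp[OF c] by simp
      have 2: "e c" using bspec[OF h[THEN conjunct2], of 1] rcit_Suc_c_Yp[OF c, of 0] by simp
      have 3: "\<forall>m\<in>{1..n}. e (the (rcit P c m))"
      proof
        fix m assume "m \<in> {1..n}"
        then have "Suc m \<in> {1..Suc n}" by auto
        then show "e (the (rcit P c m))" using h rcit_Suc_c_Yp[OF c, of m] by metis
      qed
      have "j \<in> BR' P e c" using 1 3 by (auto simp: BR'_def)
      then show "Q i j" using step[OF c 2] Suc.IH 1 3 by blast
    qed
  qed
  then show ?thesis using n by blast
qed

lemma BRp_self_Yp: "i \<in> BR' P e i"
  using BRp_rec_Yp by blast

lemma BRp_S_Yp: "j \<in> BR' P e i \<Longrightarrow> bst P \<Longrightarrow> i \<in> set_tree P \<Longrightarrow> j \<in> Ssub P i"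
proof (induction rule: BRp_induct_Yp)
  case (base i)
  then show ?case using S_self by blast
next
  case (step i c j)
  then have "j \<in> Ssub P c" using rc_in by blast
  then show ?case using rc_S[OF step.prems(1) step.hyps(1)] R_sub_S by blast
qed

lemma BRp_parent_Yp: "j \<in> BR' P e i \<Longrightarrow> j \<noteq> i \<Longrightarrow> \<exists>q\<in>BR' P e i. rc P q = Some j \<and> e j"
proof (induction rule: BRp_induct_Yp)
  case (base i)
  then show ?case by simp
next
  case (step i c j)
  have sub: "BR' P e c \<subseteq> BR' P e i" using BRp_rec_Yp[of _ P e i] step.hyps(1,2) by blast
  show ?case
  proof (cases "j = c")
    case True
    then show ?thesis using step.hyps BRp_self_Yp by blast
  next
    case False
    then show ?thesis using step.IH sub by blast
  qed
qed

lemma BRp_closed_Yp: "q \<in> BR' P e i \<Longrightarrow> rc P q = Some j \<Longrightarrow> e j \<Longrightarrow> j \<in> BR' P e i"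
proof (induction arbitrary: j rule: BRp_induct_Yp)
  case (base i)
  then show ?case using BRp_rec_Yp[of j P e i] BRp_self_Yp by blast
next
  case (step i c q)
  then have "j \<in> BR' P e c" by blast
  then show ?case using BRp_rec_Yp[of j P e i] step.hyps by blast
qed

lemma BRp_not_child_Yp: "bst P \<Longrightarrow> i \<in> set_tree P \<Longrightarrow> q \<in> BR' P e i \<Longrightarrow> \<not> child P q i"
proof
  assume b: "bst P" and i: "i \<in> set_tree P" and q: "q \<in> BR' P e i" and c: "child P q i"
  have qi: "q \<in> Ssub P i" using BRp_S_Yp[OF q b i] .
  have "i \<in> Ssub P q" using child_sub[OF c] R_sub_S L_sub_S by blast
  then have "q = i" using S_antisym[OF b] qi by blast
  then show False using child_sub[OF c] not_R_self[OF b] not_L_self[OF b] by blast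
qed

lemma lcit_Suc_A_Yp: "lcit t i (Suc n) = (case lc t i of None \<Rightarrow> None | Some j \<Rightarrow> lcit t j n)"
  by (induction n) (auto simp: lcit.simps split: option.splits)

lemma lcit_Suc_c_A_Yp: "lc t i = Some c \<Longrightarrow> lcit t i (Suc n) = lcit t c n"
  by (simp add: lcit_Suc_A_Yp)

lemma AL_rec_Yp: "a \<in> AL P e p \<longleftrightarrow> a \<in> set_tree P \<and> (a = p \<or> (\<exists>a2. lc P a = Some a2 \<and> e a2 \<and> a2 \<in> AL P e p))"
proof
  assume "a \<in> AL P e p"
  then obtain n where a: "a \<in> set_tree P" and n: "lcit P a n = Some p" "\<forall>m\<in>{1..n}. e (the (lcit P a m))"
    by (auto simp: AL_def)
  show "a \<in> set_tree P \<and> (a = p \<or> (\<exists>a2. lc P a = Some a2 \<and> e a2 \<and> a2 \<in> AL P e p))"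
  proof (cases n)
    case 0
    then show ?thesis using n a by simp
  next
    case (Suc n')
    obtain c where c: "lc P a = Some c"
      using n(1) Suc by (cases "lc P a") (auto simp: lcit_Suc_A_Yp)
    have "lcit P c n' = Some p" using n(1) Suc lcit_Suc_c_A_Yp[OF c] by simp
    moreover have "e c" using bspec[OF n(2), of 1] Suc lcit_Suc_c_A_Yp[OF c, of 0] by simp
    moreover have "\<forall>m\<in>{1..n'}. e (the (lcit P c m))"
    proof
      fix m assume "m \<in> {1..n'}"
      then have "Suc m \<in> {1..n}" using Suc by auto
      then show "e (the (lcit P c m))" using n(2) lcit_Suc_c_A_Yp[OF c, of m] by metis
    qed
    moreover have "c \<in> set_tree P" using lc_in[OF c] by blast
    ultimately show ?thesis using c a by (auto simp: AL_def)
  qed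
next
  assume h: "a \<in> set_tree P \<and> (a = p \<or> (\<exists>a2. lc P a = Some a2 \<and> e a2 \<and> a2 \<in> AL P e p))"
  then have a: "a \<in> set_tree P" by blast
  from h have "a = p \<or> (\<exists>a2. lc P a = Some a2 \<and> e a2 \<and> a2 \<in> AL P e p)" by blast
  then show "a \<in> AL P e p"
  proof
    assume "a = p"
    then show ?thesis using a by (auto simp: AL_def intro: exI[of _ 0])
  next
    assume "\<exists>a2. lc P a = Some a2 \<and> e a2 \<and> a2 \<in> AL P e p"
    then obtain c n where c: "lc P a = Some c" "e c" "lcit P c n = Some p"
      "\<forall>m\<in>{1..n}. e (the (lcit P c m))" by (auto simp: AL_def)
    have "lcit P a (Suc n) = Some p" using c lcit_Suc_c_A_Yp[OF c(1)] by simp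
    moreover have "\<forall>m\<in>{1..Suc n}. e (the (lcit P a m))"
    proof
      fix m assume m: "m \<in> {1..Suc n}"
      show "e (the (lcit P a m))"
      proof (cases m)
        case 0 then show ?thesis using m by simp
      next
        case (Suc m')
        show ?thesis
        proof (cases m')
          case 0 then show ?thesis using Suc c lcit_Suc_c_A_Yp[OF c(1), of 0] by simp
        next
          case (Suc m'')
          then show ?thesis using \<open>m = Suc m'\<close> m c(4) lcit_Suc_c_A_Yp[OF c(1), of m'] by auto
        qed
      qed
    qed
    ultimately show ?thesis using a by (auto simp: AL_def)
  qed
qed

lemma AL_induct_Yp[consumes 1, case_names base step]:
  assumes "a \<in> AL P e p"
    and base: "p \<in> set_tree P \<Longrightarrow> Q p"
    and step: "\<And>a a2. lc P a = Some a2 \<Longrightarrow> e a2 \<Longrightarrow> a2 \<in> AL P e p \<Longrightarrow> Q a2 \<Longrightarrow> Q a"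
  shows "Q a"
proof -
  obtain n where a: "a \<in> set_tree P" and n: "lcit P a n = Some p" "\<forall>m\<in>{1..n}. e (the (lcit P a m))"
    using assms(1) by (auto simp: AL_def)
  have "\<forall>a. a \<in> set_tree P \<and> lcit P a n = Some p \<and> (\<forall>m\<in>{1..n}. e (the (lcit P a m))) \<longrightarrow> Q a"
  proof (induction n)
    case 0
    then show ?case using base by simp
  next
    case (Suc n)
    show ?case
    proof (intro allI impI)
      fix a assume h: "a \<in> set_tree P \<and> lcit P a (Suc n) = Some p \<and> (\<forall>m\<in>{1..Suc n}. e (the (lcit P a m)))"
      obtain c where c: "lc P a = Some c"
        using h by (cases "lc P a") (auto simp: lcit_Suc_A_Yp)
      have 1: "lcit P c n = Some p" using h lcit_Suc_c_A_Yp[OF c] by simp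
      have 2: "e c" using bspec[OF h[THEN conjunct2, THEN conjunct2], of 1] lcit_Suc_c_A_Yp[OF c, of 0] by simp
      have 3: "\<forall>m\<in>{1..n}. e (the (lcit P c m))"
      proof
        fix m assume "m \<in> {1..n}"
        then have "Suc m \<in> {1..Suc n}" by auto
        then show "e (the (lcit P c m))" using h lcit_Suc_c_A_Yp[OF c, of m] by metis
      qed
      have cP: "c \<in> set_tree P" using lc_in[OF c] by blast
      have "c \<in> AL P e p" using 1 3 cP by (auto simp: AL_def)
      then show "Q a" using step[OF c 2] Suc.IH 1 3 cP by blast
    qed
  qed
  then show ?thesis using n a by blast
qed

lemma AL_self_Yp: "p \<in> set_tree P \<Longrightarrow> p \<in> AL P e p"
  using AL_rec_Yp by blast

lemma AL_S_Yp: "a \<in> AL P e p \<Longrightarrow> bst P \<Longrightarrow> p \<in> Ssub P a"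
proof (induction rule: AL_induct_Yp)
  case base
  then show ?case using S_self by blast
next
  case (step a a2)
  then show ?case using lc_S[OF step.prems step.hyps(1)] L_sub_S by blast
qed

lemma AL_step_Yp: "a \<in> AL P e p \<Longrightarrow> a \<noteq> p \<Longrightarrow> \<exists>a2. lc P a = Some a2 \<and> e a2 \<and> a2 \<in> AL P e p"
  using AL_rec_Yp by blast

lemma AL_closed_Yp: "a2 \<in> AL P e p \<Longrightarrow> lc P a = Some a2 \<Longrightarrow> e a2 \<Longrightarrow> a \<in> AL P e p"
  using AL_rec_Yp[of a P e p] lc_in by blast

lemma i_notin_AL_Yp: "bst P \<Longrightarrow> lc P p = Some i \<Longrightarrow> i \<notin> AL P e p"
proof
  assume b: "bst P" and pi: "lc P p = Some i" and iA: "i \<in> AL P e p"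
  have "p \<in> Ssub P i" using AL_S_Yp[OF iA b] .
  moreover have "i \<in> Ssub P p" using lc_L[OF pi] L_sub_S by blast
  ultimately have "p = i" using S_antisym[OF b] by blast
  then show False using lc_L[OF pi] not_L_self[OF b] by simp
qed

lemma AL_top_Yp:
  assumes b: "bst P" and j: "j \<in> AL P e p" and q: "rc P q = Some j"
  shows "aL P e p = j"
proof -
  have claim: "a \<in> Ssub P j \<or> (\<exists>w. lc P w = Some j)" if a: "a \<in> AL P e p" for a
    using a
  proof (induction rule: AL_induct_Yp)
    case base
    then show ?case using AL_S_Yp[OF j b] by blast
  next
    case (step a a2)
    show ?case
    proof (cases "\<exists>w. lc P w = Some j")
      case True
      then show ?thesis by blast
    next
      case False
      then have a2j: "a2 \<in> Ssub P j" using step.IH by blast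
      have "a2 \<noteq> j" using False step.hyps(1) by blast
      then obtain w where w: "w \<in> Ssub P j" "child P w a2" using parent_between[OF b a2j] by blast
      have "w = a" using parent_unique[OF b w(2) child_lc[OF step.hyps(1)]] .
      then show ?thesis using w by blast
    qed
  qed
  have noR: "\<not> (\<exists>w. lc P w = Some j)" using rc_lc_distinct[OF b q] by blast
  have all: "\<forall>a\<in>AL P e p. a \<in> Ssub P j" using claim noR by blast
  have m1: "aL P e p \<in> AL P e p" unfolding aL_def by (rule arg_min_natI[of _ j]) (rule j)
  have m2: "depth P (aL P e p) \<le> depth P j" unfolding aL_def by (rule arg_min_nat_le) (rule j)
  show ?thesis
  proof (rule ccontr)
    assume "aL P e p \<noteq> j"
    then have "depth P j < depth P (aL P e p)" using depth_less[OF b] all m1 by blast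
    then show False using m2 by simp
  qed
qed

lemma finish_Yp:
  assumes b: "bst P" and v: "valid T P e f" and pi: "lc P p = Some i" and t: "lc T (f p) = Some (f i)"
  shows "valid T P (e(i := True)) f"
proof (rule validI)
  show "f ` set_tree P \<subseteq> set_tree T" using v valid_def by blast
next
  fix q j assume qj: "rc P q = Some j"
  then have "j \<noteq> i" using rc_lc_distinct[OF b qj] pi by blast
  then show "if (e(i := True)) j then rc T (f q) = Some (f j) else f j \<in> Rsub T (f q)"
    using valid_rc[OF v qj] by simp
next
  fix q j assume qj: "lc P q = Some j"
  show "if (e(i := True)) j then lc T (f q) = Some (f j) else f j \<in> Lsub T (f q)"
  proof (cases "j = i")
    case True
    then have "q = p" using parent_unique[OF b child_lc[OF qj[unfolded True]] child_lc[OF pi]] by simp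
    then show ?thesis using True t by simp
  next
    case False
    then show ?thesis using valid_lc[OF v qj] by simp
  qed
qed

lemma moveB_Yp:
  assumes bP: "bst P" and bT: "bst T" and v: "valid T P e f" and ne: "\<not> e i"
    and pi: "lc P p = Some i" and Bc: "\<forall>j\<in>BR' P e i. lc P j = None"
    and w: "rc T w = Some (f i)" and wR: "w \<in> Lsub T (f p)"
  shows "\<exists>g. valid T P e g \<and> g i = w \<and> g p = f p"
proof -
  define tp where "tp z = (SOME w. rc T w = Some z)" for z
  define g where "g x = (if x \<in> BR' P e i then tp (f x) else f x)" for x
  have iP: "i \<in> set_tree P" using lc_in[OF pi] by blast
  have ex: "\<exists>w. rc T w = Some (f b)" if b: "b \<in> BR' P e i" for b
  proof (cases "b = i")
    case True
    then show ?thesis using w by blast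
  next
    case False
    then obtain q where "q \<in> BR' P e i" "rc P q = Some b" "e b" using BRp_parent_Yp[OF b] by blast
    then show ?thesis using valid_rc[OF v, of q b] by auto
  qed
  have tpc: "rc T (tp (f b)) = Some (f b)" if b: "b \<in> BR' P e i" for b
    unfolding tp_def using someI_ex[OF ex[OF b]] .
  have tpi: "tp (f i) = w"
    using parent_unique[OF bT child_rc[OF tpc[OF BRp_self_Yp]] child_rc[OF w]] .
  have pB: "p \<notin> BR' P e i" using BRp_not_child_Yp[OF bP iP] child_lc[OF pi] by blast
  have gi: "g i = w" using tpi BRp_self_Yp by (simp add: g_def)
  have gp: "g p = f p" using pB by (simp add: g_def)
  have "valid T P e g"
  proof (rule validI)
    show "g ` set_tree P \<subseteq> set_tree T"
    proof
      fix y assume "y \<in> g ` set_tree P"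
      then obtain x where x: "x \<in> set_tree P" "y = g x" by blast
      show "y \<in> set_tree T"
      proof (cases "x \<in> BR' P e i")
        case True
        then show ?thesis using x rc_in[OF tpc[OF True]] by (simp add: g_def)
      next
        case False
        then show ?thesis using x valid_img[OF v] by (simp add: g_def)
      qed
    qed
  next
    fix q j assume qj: "rc P q = Some j"
    have ji: "j \<noteq> i" using rc_lc_distinct[OF bP qj] pi by blast
    show "if e j then rc T (g q) = Some (g j) else g j \<in> Rsub T (g q)"
    proof (cases "q \<in> BR' P e i")
      case qB: True
      show ?thesis
      proof (cases "e j")
        case True
        then have jB: "j \<in> BR' P e i" using BRp_closed_Yp[OF qB qj] by blast
        have "rc T (f q) = Some (f j)" using valid_rc[OF v qj] True by simp
        then have "tp (f j) = f q" using parent_unique[OF bT child_rc[OF tpc[OF jB]]] child_rc by blast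
        then have "g j = f q" using jB by (simp add: g_def)
        then show ?thesis using True tpc[OF qB] qB by (simp add: g_def)
      next
        case False
        have jB: "j \<notin> BR' P e i"
        proof
          assume jB: "j \<in> BR' P e i"
          then obtain q' where "rc P q' = Some j" "e j" using BRp_parent_Yp[OF jB ji] by blast
          then show False using False by simp
        qed
        have "f j \<in> Rsub T (f q)" using valid_R[OF v qj] .
        moreover have "Ssub T (f q) = Rsub T (tp (f q))" using rc_S[OF bT tpc[OF qB]] .
        ultimately have "f j \<in> Rsub T (tp (f q))" using R_sub_S by blast
        then show ?thesis using False jB qB by (simp add: g_def)
      qed
    next
      case qB: False
      have jB: "j \<notin> BR' P e i"
      proof
        assume jB: "j \<in> BR' P e i"
        then obtain q' where q': "q' \<in> BR' P e i" "rc P q' = Some j" using BRp_parent_Yp[OF jB ji] by blast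
        then have "q' = q" using parent_unique[OF bP child_rc[OF q'(2)] child_rc[OF qj]] by simp
        then show False using q' qB by simp
      qed
      then show ?thesis using valid_rc[OF v qj] qB by (simp add: g_def)
    qed
  next
    fix q j assume qj: "lc P q = Some j"
    show "if e j then lc T (g q) = Some (g j) else g j \<in> Lsub T (g q)"
    proof (cases "q \<in> BR' P e i")
      case True
      then show ?thesis using Bc qj by simp
    next
      case qB: False
      show ?thesis
      proof (cases "j \<in> BR' P e i")
        case jB: True
        show ?thesis
        proof (cases "j = i")
          case True
          then have "q = p" using parent_unique[OF bP child_lc[OF qj[unfolded True]] child_lc[OF pi]] by simp
          then show ?thesis using True ne gi gp wR by simp
        next
          case False
          then obtain q' where q': "rc P q' = Some j" using BRp_parent_Yp[OF jB] by blast
          then show ?thesis using rc_lc_distinct[OF bP q' qj] by blast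
        qed
      next
        case False
        then show ?thesis using valid_lc[OF v qj] qB by (simp add: g_def)
      qed
    qed
  qed
  then show ?thesis using gi gp by blast
qed

lemma moveA_Yp:
  assumes bP: "bst P" and bT: "bst T" and v: "valid T P e f"
    and pi: "lc P p = Some i" and lp: "rc P p = None" and top: "\<forall>q. child P q p \<longrightarrow> \<not> e p"
    and w: "lc T w = Some (f i)" and wR: "w \<in> Lsub T (f p)"
  shows "valid T P (e(i := True)) (f(p := w))"
proof -
  have ip: "i \<noteq> p" using lc_L[OF pi] not_L_self[OF bP] by auto
  have wS: "w \<in> Ssub T (f p)" using wR L_sub_S by blast
  show ?thesis
  proof (rule validI)
    show "(f(p := w)) ` set_tree P \<subseteq> set_tree T"
      using valid_img[OF v] L_in[OF wR] by auto
  next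
    fix q j assume qj: "rc P q = Some j"
    have ji: "j \<noteq> i" using rc_lc_distinct[OF bP qj] pi by blast
    have qp: "q \<noteq> p" using qj lp by auto
    show "if (e(i := True)) j then rc T ((f(p := w)) q) = Some ((f(p := w)) j) else (f(p := w)) j \<in> Rsub T ((f(p := w)) q)"
    proof (cases "j = p")
      case True
      then have "\<not> e p" using top child_rc[OF qj] by blast
      moreover have "w \<in> Rsub T (f q)" using R_trans[OF bT valid_R[OF v qj]] wS True by blast
      ultimately show ?thesis using True qp ji by simp
    next
      case False
      then show ?thesis using valid_rc[OF v qj] qp ji by simp
    qed
  next
    fix q j assume qj: "lc P q = Some j"
    show "if (e(i := True)) j then lc T ((f(p := w)) q) = Some ((f(p := w)) j) else (f(p := w)) j \<in> Lsub T ((f(p := w)) q)"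
    proof (cases "j = i")
      case True
      then have "q = p" using parent_unique[OF bP child_lc[OF qj[unfolded True]] child_lc[OF pi]] by simp
      then show ?thesis using True w ip by simp
    next
      case ji: False
      have qp: "q \<noteq> p" using qj pi ji by auto
      show ?thesis
      proof (cases "j = p")
        case True
        then have "\<not> e p" using top child_lc[OF qj] by blast
        moreover have "w \<in> Lsub T (f q)" using L_trans[OF bT valid_L[OF v qj]] wS True by blast
        ultimately show ?thesis using True qp ji by simp
      next
        case False
        then show ?thesis using valid_lc[OF v qj] qp ji by simp
      qed
    qed
  qed
qed

lemma shift_Yp:
  assumes bP: "bst P" and bT: "bst T" and v: "valid T P e f" and ne: "\<not> e i"
    and pi: "lc P p = Some i" and Al: "\<forall>a\<in>AL P e p. rc P a = None"
    and top: "Some (aL P e p) = root_of P \<or> \<not> e (aL P e p)"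
    and y: "lc T (f p) = Some y" and iy: "f i \<in> Lsub T y"
  shows "\<exists>g. valid T P e g \<and> g p = y \<and> g i = f i"
proof -
  define g where "g x = (if x \<in> AL P e p then the (lc T (f x)) else f x)" for x
  have pA: "p \<in> AL P e p" using AL_self_Yp lc_in[OF pi] by blast
  have iA: "i \<notin> AL P e p" using i_notin_AL_Yp[OF bP pi] .
  have ex: "lc T (f a) \<noteq> None" if a: "a \<in> AL P e p" for a
  proof (cases "a = p")
    case True
    then show ?thesis using y by simp
  next
    case False
    then obtain a2 where "lc P a = Some a2" "e a2" using AL_step_Yp[OF a] by blast
    then show ?thesis using valid_lc[OF v, of a a2] by auto
  qed
  have gc: "lc T (f a) = Some (g a)" if a: "a \<in> AL P e p" for a
    using ex[OF a] a by (auto simp: g_def)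
  have gp: "g p = y" using gc[OF pA] y by simp
  have gi: "g i = f i" using iA by (simp add: g_def)
  have "valid T P e g"
  proof (rule validI)
    show "g ` set_tree P \<subseteq> set_tree T"
    proof
      fix z assume "z \<in> g ` set_tree P"
      then obtain x where x: "x \<in> set_tree P" "z = g x" by blast
      show "z \<in> set_tree T"
      proof (cases "x \<in> AL P e p")
        case True
        then show ?thesis using x lc_in[OF gc[OF True]] by simp
      next
        case False
        then show ?thesis using x valid_img[OF v] by (simp add: g_def)
      qed
    qed
  next
    fix q j assume qj: "rc P q = Some j"
    have qA: "q \<notin> AL P e p" using Al qj by auto
    show "if e j then rc T (g q) = Some (g j) else g j \<in> Rsub T (g q)"
    proof (cases "j \<in> AL P e p")
      case True
      then have "aL P e p = j" using AL_top_Yp[OF bP True qj] by blast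
      moreover have "root_of P \<noteq> Some j" using child_ne_root[OF bP child_rc[OF qj]] .
      ultimately have nej: "\<not> e j" using top by auto
      have "g j \<in> Ssub T (f j)" using lc_L[OF gc[OF True]] L_sub_S by blast
      then have "g j \<in> Rsub T (f q)" using R_trans[OF bT valid_R[OF v qj]] by blast
      then show ?thesis using nej qA by (simp add: g_def)
    next
      case False
      then show ?thesis using valid_rc[OF v qj] qA by (simp add: g_def)
    qed
  next
    fix q j assume qj: "lc P q = Some j"
    show "if e j then lc T (g q) = Some (g j) else g j \<in> Lsub T (g q)"
    proof (cases "q \<in> AL P e p")
      case qA: True
      show ?thesis
      proof (cases "q = p")
        case True
        then have "j = i" using qj pi by simp
        then show ?thesis using ne gi gp iy True by simp
      next
        case False
        then obtain a2 where a2: "lc P q = Some a2" "e a2" "a2 \<in> AL P e p" using AL_step_Yp[OF qA] by blast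
        then have ja: "j = a2" using qj by simp
        have "lc T (f q) = Some (f j)" using valid_lc[OF v qj] a2 ja by simp
        then have "g q = f j" using gc[OF qA] by simp
        then show ?thesis using gc[OF a2(3)] ja a2 by simp
      qed
    next
      case qA: False
      show ?thesis
      proof (cases "j \<in> AL P e p")
        case True
        then have nej: "\<not> e j" using AL_closed_Yp[OF True qj] qA by blast
        have "g j \<in> Ssub T (f j)" using lc_L[OF gc[OF True]] L_sub_S by blast
        then have "g j \<in> Lsub T (f q)" using L_trans[OF bT valid_L[OF v qj]] by blast
        then show ?thesis using nej qA by (simp add: g_def)
      next
        case False
        then show ?thesis using valid_lc[OF v qj] qA by (simp add: g_def)
      qed
    qed
  qed
  then show ?thesis using gp gi by blast
qed


lemma case_m0_Yp:
  assumes bP: "bst P" and bT: "bst T" and ne: "\<not> e i"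
    and pi: "lc P p = Some i" and lp: "rc P p = None" and top: "\<forall>q. child P q p \<longrightarrow> \<not> e p"
    and Bc: "\<forall>j\<in>BR' P e i. lc P j = None"
  shows "valid T P e f \<Longrightarrow> \<exists>g. valid T P (e(i := True)) g"
proof (induction "card (set_tree T) - card (Ssub T (f i))" arbitrary: f rule: less_induct)
  case less
  have v: "valid T P e f" by fact
  have fiR: "f i \<in> Lsub T (f p)" using valid_L[OF v pi] .
  obtain y where y: "lc T (f p) = Some y" using L_nonempty[OF fiR] by blast
  have Ry: "Lsub T (f p) = Ssub T y" using lc_S[OF bT y] by simp
  show ?case
  proof (cases "f i = y")
    case True
    then show ?thesis using finish_Yp[OF bP v pi] y by auto
  next
    case False
    have fiy: "f i \<in> Ssub T y" using fiR Ry by simp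
    obtain w where w: "w \<in> Ssub T y" "child T w (f i)" using parent_between[OF bT fiy False] by blast
    have wR: "w \<in> Lsub T (f p)" using w(1) Ry by simp
    show ?thesis
    proof (cases "rc T w = Some (f i)")
      case True
      obtain g where g: "valid T P e g" "g i = w" "g p = f p"
        using moveB_Yp[OF bP bT v ne pi Bc True wR] by blast
      have wT: "w \<in> set_tree T" using rc_in[OF True] by blast
      have s1: "Ssub T (f i) = Rsub T w" using rc_S[OF bT True] .
      have s2: "Rsub T w \<subset> Ssub T w" using R_sub_S S_self[OF wT] not_R_self[OF bT] by blast
      have fin: "finite (Ssub T w)" using S_subset finite_subset by (metis finite_set_tree)
      have "card (Ssub T (f i)) < card (Ssub T w)" using s1 s2 fin psubset_card_mono by metis
      moreover have "card (Ssub T w) \<le> card (set_tree T)" using S_subset card_mono by (metis finite_set_tree)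
      ultimately have "card (set_tree T) - card (Ssub T (g i)) < card (set_tree T) - card (Ssub T (f i))"
        using g(2) by simp
      then show ?thesis using less.hyps g(1) by blast
    next
      case False
      then have "lc T w = Some (f i)" using w(2) by (simp add: child_def)
      then show ?thesis using moveA_Yp[OF bP bT v pi lp top _ wR] by blast
    qed
  qed
qed

lemma case_s0_Yp:
  assumes bP: "bst P" and bT: "bst T" and ne: "\<not> e i"
    and pi: "lc P p = Some i" and lic: "rc P i = Some c" and nc: "\<not> e c" and ri: "lc P i = None"
    and Al: "\<forall>a\<in>AL P e p. rc P a = None"
    and top: "Some (aL P e p) = root_of P \<or> \<not> e (aL P e p)"
  shows "valid T P e f \<Longrightarrow> \<exists>g. valid T P (e(i := True)) g"
proof (induction "card (Lsub T (f p))" arbitrary: f rule: less_induct)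
  case less
  have v: "valid T P e f" by fact
  have fiR: "f i \<in> Lsub T (f p)" using valid_L[OF v pi] .
  obtain y where y: "lc T (f p) = Some y" using L_nonempty[OF fiR] by blast
  have Ry: "Lsub T (f p) = Ssub T y" using lc_S[OF bT y] by simp
  have yT: "y \<in> set_tree T" using lc_in[OF y] by blast
  have fiy: "f i \<in> Ssub T y" using fiR Ry by simp
  have ip: "i \<noteq> p" using lc_L[OF pi] not_L_self[OF bP] by auto
  have ci: "c \<noteq> i" using rc_R[OF lic] not_R_self[OF bP] by auto
  show ?case
  proof (cases "f i = y")
    case True
    then show ?thesis using finish_Yp[OF bP v pi] y by auto
  next
    case False
    then have "f i \<in> Rsub T y \<or> f i \<in> Lsub T y" using fiy S_decomp[OF yT] by blast
    then show ?thesis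
    proof
      assume iL: "f i \<in> Rsub T y"
      have "valid T P (e(i := True)) (f(i := y))"
      proof (rule validI)
        show "(f(i := y)) ` set_tree P \<subseteq> set_tree T" using valid_img[OF v] yT by auto
      next
        fix q j assume qj: "rc P q = Some j"
        have ji: "j \<noteq> i" using rc_lc_distinct[OF bP qj] pi by blast
        show "if (e(i := True)) j then rc T ((f(i := y)) q) = Some ((f(i := y)) j) else (f(i := y)) j \<in> Rsub T ((f(i := y)) q)"
        proof (cases "q = i")
          case True
          then have jc: "j = c" using qj lic by simp
          have "f c \<in> Rsub T (f i)" using valid_R[OF v lic] .
          then have "f c \<in> Rsub T y" using R_trans[OF bT iL] R_sub_S by blast
          then show ?thesis using True jc nc ci by simp
        next
          case False
          then show ?thesis using valid_rc[OF v qj] ji by simp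
        qed
      next
        fix q j assume qj: "lc P q = Some j"
        have qi: "q \<noteq> i" using qj ri by auto
        show "if (e(i := True)) j then lc T ((f(i := y)) q) = Some ((f(i := y)) j) else (f(i := y)) j \<in> Lsub T ((f(i := y)) q)"
        proof (cases "j = i")
          case True
          then have "q = p" using parent_unique[OF bP child_lc[OF qj[unfolded True]] child_lc[OF pi]] by simp
          then show ?thesis using True y ip by simp
        next
          case False
          then show ?thesis using valid_lc[OF v qj] qi by simp
        qed
      qed
      then show ?thesis by blast
    next
      assume iR: "f i \<in> Lsub T y"
      obtain g where g: "valid T P e g" "g p = y" "g i = f i"
        using shift_Yp[OF bP bT v ne pi Al top y iR] by blast
      have fin: "finite (Lsub T (f p))" using L_in[of _ T "f p"] finite_subset[of "Lsub T (f p)" "set_tree T"] finite_set_tree by blast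
      have "Lsub T y \<subset> Lsub T (f p)" using Ry L_sub_S[of T y] lc_L[OF y] not_L_self[OF bT] by blast
      then have "card (Lsub T (g p)) < card (Lsub T (f p))" using g(2) fin psubset_card_mono by metis
      then show ?thesis using less.hyps g(1) by blast
    qed
  qed
qed

lemma Y'set_case_Yp:
  assumes bP: "bst P" and bT: "bst T" and v: "valid T P e f" and iY: "i \<in> Y'set P e" and ne: "\<not> e i"
  shows "\<exists>g. valid T P (e(i := True)) g"
proof -
  obtain p where ic: "rc P i \<noteq> None" and pi: "lc P p = Some i"
    and alt: "AL P e p = {p} \<or> BR' P e i = {i}"
    and Al: "\<forall>j\<in>AL P e p. rc P j = None" and Bc: "\<forall>j\<in>BR' P e i. lc P j = None"
    and top: "Some (aL P e p) = root_of P \<or> \<not> e (aL P e p)"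
    using iY unfolding Y'set_def by blast
  have pA: "p \<in> AL P e p" using AL_self_Yp lc_in[OF pi] by blast
  show ?thesis
  proof (cases "AL P e p = {p}")
    case True
    have "aL P e p \<in> AL P e p" unfolding aL_def by (rule arg_min_natI[of _ p]) (rule pA)
    then have ap: "aL P e p = p" using True by blast
    have lp: "rc P p = None" using Al pA by blast
    have top': "\<forall>q. child P q p \<longrightarrow> \<not> e p"
      using top ap child_ne_root[OF bP] by metis
    show ?thesis using case_m0_Yp[OF bP bT ne pi lp top' Bc v] .
  next
    case False
    then have B: "BR' P e i = {i}" using alt by blast
    obtain c where lic: "rc P i = Some c" using ic by blast
    have ci: "c \<noteq> i" using rc_R[OF lic] not_R_self[OF bP] by auto
    have nc: "\<not> e c"
    proof
      assume "e c"
      then have "c \<in> BR' P e i" using BRp_rec_Yp[of c P e i] lic BRp_self_Yp by blast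
      then show False using B ci by blast
    qed
    have ri: "lc P i = None" using Bc BRp_self_Yp by blast
    show ?thesis using case_s0_Yp[OF bP bT ne pi lic nc ri Al top v] .
  qed
qed

lemma leaf_Yp:
  assumes bP: "bst P" and bT: "bst T" and v: "valid T P e f"
    and li: "rc P i = None" and ri: "lc P i = None" and qi: "rc P q = Some i" and ne: "\<not> e i"
  shows "\<exists>g. valid T P (e(i := True)) g"
proof -
  have "f i \<in> Rsub T (f q)" using valid_R[OF v qi] .
  then obtain c where c: "rc T (f q) = Some c" using R_nonempty by blast
  have iq: "q \<noteq> i" using rc_R[OF qi] not_R_self[OF bP] by auto
  have "valid T P (e(i := True)) (f(i := c))"
  proof (rule validI)
    show "(f(i := c)) ` set_tree P \<subseteq> set_tree T" using valid_img[OF v] rc_in[OF c] by auto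
  next
    fix p j assume pj: "rc P p = Some j"
    have pi: "p \<noteq> i" using pj li by auto
    show "if (e(i := True)) j then rc T ((f(i := c)) p) = Some ((f(i := c)) j) else (f(i := c)) j \<in> Rsub T ((f(i := c)) p)"
    proof (cases "j = i")
      case True
      then have "p = q" using parent_unique[OF bP child_rc[OF pj[unfolded True]] child_rc[OF qi]] by simp
      then show ?thesis using True c iq by simp
    next
      case False
      then show ?thesis using valid_rc[OF v pj] pi by simp
    qed
  next
    fix p j assume pj: "lc P p = Some j"
    have pi: "p \<noteq> i" using pj ri by auto
    have ji: "j \<noteq> i" using lc_rc_distinct[OF bP pj] qi by blast
    show "if (e(i := True)) j then lc T ((f(i := c)) p) = Some ((f(i := c)) j) else (f(i := c)) j \<in> Lsub T ((f(i := c)) p)"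
      using valid_lc[OF v pj] pi ji by simp
  qed
  then show ?thesis by blast
qed


lemma search_bst: "T \<in> search_trees n \<Longrightarrow> bst T"
proof -
  assume "T \<in> search_trees n"
  then have "inorder T = [1..<n+1]" by (simp add: search_trees_def)
  moreover have "sorted_wrt (<) [1..<n+1]" by (rule sorted_wrt_upt)
  ultimately show ?thesis unfolding bst_iff_sorted_wrt_less by simp
qed

lemma main_dir:
  assumes bP: "bst P" and bT: "bst T" and v: "valid T P e f"
    and iS: "i \<in> Xset P \<union> Yset P e \<union> Y'set P e" and nr: "Some i \<noteq> root_of P" and ne: "\<not> e i"
  shows "\<exists>g. valid T P (e(i := True)) g"
proof -
  consider "i \<in> Xset P" | "i \<in> Yset P e" | "i \<in> Y'set P e" using iS by blast
  then show ?thesis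
  proof cases
    case 1
    then have iP: "i \<in> set_tree P" and li: "lc P i = None" and ri: "rc P i = None"
      unfolding Xset_def by auto
    obtain q where "child P q i" using parent_exists[OF bP iP] nr by metis
    then have "lc P q = Some i \<or> rc P q = Some i" by (simp add: child_def)
    then show ?thesis
    proof
      assume "lc P q = Some i"
      then show ?thesis using leaf_Y[OF bP bT v li ri _ ne] by blast
    next
      assume "rc P q = Some i"
      then show ?thesis using leaf_Yp[OF bP bT v ri li _ ne] by blast
    qed
  next
    case 2
    then show ?thesis using Yset_case_Y[OF bP bT v _ ne] by blast
  next
    case 3
    then show ?thesis using Y'set_case_Yp[OF bP bT v _ ne] by blast
  qed
qed

theorem theorem11:
  fixes P :: "nat tree" and k :: nat and e :: "nat \<Rightarrow> bool" and i :: nat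
  assumes "P \<in> search_trees k"
    and "i \<in> Xset P \<union> Yset P e \<union> Y'set P e"
    and "Some i \<noteq> root_of P"
    and "\<not> e i"
  shows "\<forall>n. avoiders n P e = avoiders n P (e(i := True))"
proof
  fix n
  have bP: "bst P" using search_bst assms(1) by blast
  have eq: "contains T P e \<longleftrightarrow> contains T P (e(i := True))" if T: "T \<in> search_trees n" for T
  proof -
    have bT: "bst T" using search_bst T by blast
    show ?thesis
    proof
      assume "contains T P e"
      then obtain f where "valid T P e f" using contains_iff[OF bP bT] by blast
      then obtain g where "valid T P (e(i := True)) g" using main_dir[OF bP bT _ assms(2-4)] by blast
      then show "contains T P (e(i := True))" using contains_iff[OF bP bT] by blast
    next
      assume "contains T P (e(i := True))"
      then obtain f where "valid T P (e(i := True)) f" using contains_iff[OF bP bT] by blast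
      then have "valid T P e f" by (rule valid_weaken) simp
      then show "contains T P e" using contains_iff[OF bP bT] by blast
    qed
  qed
  show "avoiders n P e = avoiders n P (e(i := True))"
    unfolding avoiders_def using eq by blast
qed


end
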